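(* Let $a>0$ and let $X_1,X_2,\dots$ be i.i.d. with $\mathbf{E}X_1=-a$, and assume one of the following: (a) $\overline F(x)=x^{-\alpha}L(x)$ with $\alpha>1$ and $L$ slowly varying; or (b) $\overline F(x)\sim x^{-\varkappa}e^{-g(x)}$, where $g$ is a nondecreasing continuously differentiable function with $g(x)/x^\beta$ nonincreasing for some $\beta\in(0,1/2)$, and $\mathbf{E}|X_1|^\varkappa<\infty$ with $\varkappa>1/(1-\beta)$. Then for every fixed integer $k\ge1$, \[ \sup_{v>y}\left|\frac{\mathbf{P}(S_k>v,\ \sigma_y=k)}{\overline F(v)}-\mathbf{P}(\tau>k-1)\right|\to0\qquad\text{as } y\to\infty. \]
   Context: $S_0=0$, $S_n=X_1+\dots+X_n$, $\overline F(x)=\mathbf{P}(X_1>x)$, $\tau=\min\{n\ge1:S_n\le0\}$, and for $y>0$, $\sigma_y=\inf\{n<\tau: S_n>y\}$ (with $\inf\emptyset=\infty$). *)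

theory Defs
  imports "HOL-Probability.Probability" "HOL-Library.Landau_Symbols"
begin

text \<open>Random walk with increments X 1, X 2, ... (index 0 unused); S_0 = 0.\<close>
definition rw_S :: "(nat \<Rightarrow> 'a \<Rightarrow> real) \<Rightarrow> nat \<Rightarrow> 'a \<Rightarrow> real" where
  "rw_S X n \<omega> = (\<Sum>i\<in>{1..n}. X i \<omega>)"

definition rw_tau :: "(nat \<Rightarrow> 'a \<Rightarrow> real) \<Rightarrow> 'a \<Rightarrow> enat" where
  "rw_tau X \<omega> = (if \<exists>n\<ge>1. rw_S X n \<omega> \<le> 0
      then enat (LEAST n. n \<ge> 1 \<and> rw_S X n \<omega> \<le> 0) else \<infinity>)"

definition rw_sigma :: "(nat \<Rightarrow> 'a \<Rightarrow> real) \<Rightarrow> real \<Rightarrow> 'a \<Rightarrow> enat" where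
  "rw_sigma X y \<omega> = (if \<exists>n. enat n < rw_tau X \<omega> \<and> rw_S X n \<omega> > y
      then enat (LEAST n. enat n < rw_tau X \<omega> \<and> rw_S X n \<omega> > y) else \<infinity>)"

definition slowly_varying :: "(real \<Rightarrow> real) \<Rightarrow> bool" where
  "slowly_varying L \<longleftrightarrow> (\<forall>\<^sub>F x in at_top. L x > 0) \<and>
     (\<forall>c>0. ((\<lambda>x. L (c * x) / L x) \<longlongrightarrow> 1) at_top)"

end

theory Submission
  imports Defs "HOL-Real_Asymp.Real_Asymp"
begin


locale iid_rw = prob_space +
  fixes X :: "nat \<Rightarrow> 'a \<Rightarrow> real"
  assumes rvX: "\<And>i. i \<ge> 1 \<Longrightarrow> X i \<in> borel_measurable M"
  and indepX: "indep_vars (\<lambda>_. borel) X {1..}"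
  and identX: "\<And>i. i \<ge> 1 \<Longrightarrow> distr M borel (X i) = distr M borel (X 1)"
begin

lemma S_meas[measurable]: "rw_S X n \<in> borel_measurable M"
  unfolding rw_S_def[abs_def] using rvX by (intro borel_measurable_sum) auto

lemma X_meas[measurable]: "X (Suc n) \<in> borel_measurable M"
  using rvX by auto

lemma X1_meas[measurable]: "X 1 \<in> borel_measurable M"
  using rvX by auto

lemma S_Suc: "rw_S X (Suc n) \<omega> = rw_S X n \<omega> + X (Suc n) \<omega>"
  unfolding rw_S_def by (simp add: add.commute)

lemma S_0[simp]: "rw_S X 0 \<omega> = 0"
  unfolding rw_S_def by simp

lemma X_dist:
  assumes "i \<ge> 1" "B \<in> sets borel"
  shows "prob {\<omega>\<in>space M. X i \<omega> \<in> B} = prob {\<omega>\<in>space M. X 1 \<omega> \<in> B}"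
proof -
  have "measure (distr M borel (X i)) B = measure (distr M borel (X 1)) B"
    using identX[OF assms(1)] by simp
  then show ?thesis using assms rvX
    by (subst (asm) (1 2) measure_distr) (auto simp: vimage_def Int_def conj_commute)
qed

lemma indep_block:
  fixes f :: "(nat \<Rightarrow> real) \<Rightarrow> real"
  assumes f: "f \<in> borel_measurable (PiM {1..n} (\<lambda>_. borel))"
    and A: "A \<in> sets borel" and B: "B \<in> sets borel"
  shows "prob {\<omega>\<in>space M. f (restrict (\<lambda>i. X i \<omega>) {1..n}) \<in> A \<and> X (Suc n) \<omega> \<in> B}
       = prob {\<omega>\<in>space M. f (restrict (\<lambda>i. X i \<omega>) {1..n}) \<in> A} * prob {\<omega>\<in>space M. X 1 \<omega> \<in> B}"
proof -
  have iv: "indep_var (PiM {1..n} (\<lambda>_. borel)) (\<lambda>\<omega>. restrict (\<lambda>i. X i \<omega>) {1..n})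
                (PiM {Suc n} (\<lambda>_. borel)) (\<lambda>\<omega>. restrict (\<lambda>i. X i \<omega>) {Suc n})"
    by (rule indep_var_restrict[OF indepX]) auto
  have g: "(\<lambda>x. x (Suc n)) \<in> borel_measurable (PiM {Suc n} (\<lambda>_. borel :: real measure))"
    by (rule measurable_component_singleton) simp
  have iv2: "indep_var borel (f \<circ> (\<lambda>\<omega>. restrict (\<lambda>i. X i \<omega>) {1..n})) borel
               ((\<lambda>x. x (Suc n)) \<circ> (\<lambda>\<omega>. restrict (\<lambda>i. X i \<omega>) {Suc n}))"
    by (rule indep_var_compose[OF iv f g])
  have "prob ((\<lambda>x. ((f \<circ> (\<lambda>\<omega>. restrict (\<lambda>i. X i \<omega>) {1..n})) x, ((\<lambda>x. x (Suc n)) \<circ> (\<lambda>\<omega>. restrict (\<lambda>i. X i \<omega>) {Suc n})) x)) -` (A \<times> B) \<inter> space M)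
     = prob ((f \<circ> (\<lambda>\<omega>. restrict (\<lambda>i. X i \<omega>) {1..n})) -` A \<inter> space M) * prob (((\<lambda>x. x (Suc n)) \<circ> (\<lambda>\<omega>. restrict (\<lambda>i. X i \<omega>) {Suc n})) -` B \<inter> space M)"
    by (rule indep_varD[OF iv2 A B])
  moreover have "prob (((\<lambda>x. x (Suc n)) \<circ> (\<lambda>\<omega>. restrict (\<lambda>i. X i \<omega>) {Suc n})) -` B \<inter> space M)
     = prob {\<omega>\<in>space M. X (Suc n) \<omega> \<in> B}"
    by (auto intro!: arg_cong[where f=prob])
  moreover have "prob {\<omega>\<in>space M. X (Suc n) \<omega> \<in> B} = prob {\<omega>\<in>space M. X 1 \<omega> \<in> B}"
    using X_dist[of "Suc n" B] B by simp
  ultimately show ?thesis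
    by (simp add: vimage_def Int_def conj_commute)
qed

lemma S_restrict: "rw_S X j \<omega> = (\<Sum>i\<in>{1..j}. restrict (\<lambda>i. X i \<omega>) {1..n} i)" if "j \<le> n"
  unfolding rw_S_def using that by (intro sum.cong) auto

lemma indep_S:
  assumes A: "A \<in> sets borel" and B: "B \<in> sets borel"
  shows "prob {\<omega>\<in>space M. rw_S X n \<omega> \<in> A \<and> X (Suc n) \<omega> \<in> B}
       = prob {\<omega>\<in>space M. rw_S X n \<omega> \<in> A} * prob {\<omega>\<in>space M. X 1 \<omega> \<in> B}"
proof -
  have f: "(\<lambda>x. \<Sum>i\<in>{1..n}. x i) \<in> borel_measurable (PiM {1..n} (\<lambda>_. borel :: real measure))"
    by measurable
  show ?thesis
    using indep_block[OF f A B] S_restrict[of n n] by simp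
qed

end


context prob_space begin

lemma tail0:
  fixes Y :: "'a \<Rightarrow> real"
  assumes Y: "Y \<in> borel_measurable M"
  shows "((\<lambda>t. prob {\<omega>\<in>space M. Y \<omega> > t}) \<longlongrightarrow> 0) at_top"
proof -
  let ?D = "distr M borel Y"
  have rd: "real_distribution ?D" by (rule real_distribution_distr[OF Y])
  have eq: "prob {\<omega>\<in>space M. Y \<omega> > t} = 1 - cdf ?D t" for t
  proof -
    have "cdf ?D t = prob {\<omega>\<in>space M. Y \<omega> \<le> t}"
      unfolding cdf_def using Y by (subst measure_distr) (auto simp: vimage_def Int_def conj_commute)
    moreover have "prob {\<omega>\<in>space M. Y \<omega> > t} = 1 - prob {\<omega>\<in>space M. Y \<omega> \<le> t}"
    proof -
      have "{\<omega>\<in>space M. Y \<omega> > t} = space M - {\<omega>\<in>space M. Y \<omega> \<le> t}" by auto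
      then show ?thesis using Y by (simp add: prob_compl)
    qed
    ultimately show ?thesis by simp
  qed
  have "((\<lambda>t. 1 - cdf ?D t) \<longlongrightarrow> 1 - 1) at_top"
    by (intro tendsto_intros real_distribution.cdf_lim_at_top_prob[OF rd])
  then show ?thesis by (simp add: eq)
qed

lemma tail0_ev:
  fixes Y :: "'a \<Rightarrow> real"
  assumes Y: "Y \<in> borel_measurable M" and e: "e > 0"
  shows "\<forall>\<^sub>F t in at_top. prob {\<omega>\<in>space M. Y \<omega> > t} \<le> e"
proof -
  have "\<forall>\<^sub>F t in at_top. dist (prob {\<omega>\<in>space M. Y \<omega> > t}) 0 < e"
    using tendstoD[OF tail0[OF Y] e] .
  then show ?thesis by eventually_elim (simp add: dist_real_def)
qed

end

definition good_tail :: "(real \<Rightarrow> real) \<Rightarrow> bool" where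
 "good_tail T \<longleftrightarrow> (\<forall>\<^sub>F v in at_top. T v > 0) \<and>
   (\<forall>\<epsilon>>0. \<exists>h. filterlim h at_top at_top \<and> (\<forall>\<^sub>F v in at_top. h v \<le> v / 2) \<and>
      (\<forall>\<^sub>F v in at_top. T (v - h v) \<le> (1+\<epsilon>) * T v) \<and>
      (\<forall>\<eta>>0. \<forall>t1. \<forall>\<^sub>F v in at_top. \<exists>Q. finite Q \<and> (\<forall>p\<in>Q. fst p \<ge> t1 \<and> snd p \<ge> t1) \<and>
          (\<forall>w z. h v < w \<and> h v < z \<and> v < w + z \<longrightarrow> (\<exists>p\<in>Q. fst p < w \<and> snd p < z)) \<and>
          (\<Sum>p\<in>Q. T (fst p) * T (snd p)) \<le> \<eta> * T v))"

lemma good_tail_LT: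
  assumes g: "good_tail T" and mono: "\<And>x y. x \<le> y \<Longrightarrow> T y \<le> T x"
    and e: "\<epsilon> > 0"
  shows "\<forall>\<^sub>F v in at_top. T (v - K) \<le> (1+\<epsilon>) * T v"
proof -
  obtain h where h: "filterlim h at_top at_top" "\<forall>\<^sub>F v in at_top. T (v - h v) \<le> (1+\<epsilon>) * T v"
    using g e unfolding good_tail_def by blast
  have "\<forall>\<^sub>F v in at_top. h v \<ge> K" using h(1) by (simp add: filterlim_at_top)
  with h(2) show ?thesis
  proof eventually_elim
    case (elim v)
    then have "T (v - K) \<le> T (v - h v)" by (intro mono) auto
    with elim show ?case by simp
  qed
qed

lemma good_tail_pos: "good_tail T \<Longrightarrow> \<forall>\<^sub>F v in at_top. T v > 0"
  unfolding good_tail_def by blast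


lemma arith_lower:
  fixes a p q T' t e1 n \<epsilon> :: real
  assumes "0 \<le> a" "1-e1 \<le> p" "1-e1 \<le> q" "(n-e1)*T' \<le> a" "0 \<le> T'" "t \<le> (1+e1)*T'"
    "0 < e1" "e1 \<le> 1/2" "e1*(2*n+4) \<le> \<epsilon>" "n \<ge> 0" "0 \<le> t"
  shows "(n+1-\<epsilon>)*t \<le> a*p + q*T'"
proof -
  have 1: "a*p \<ge> a*(1-e1)" using assms by (intro mult_left_mono) auto
  have 2: "a*(1-e1) \<ge> (n-e1)*T'*(1-e1)" using assms by (intro mult_right_mono) auto
  have 3: "q*T' \<ge> (1-e1)*T'" using assms by (intro mult_right_mono) auto
  define c where "c = (1-e1)*(n+1-e1)"
  have c0: "c \<ge> 0" unfolding c_def using assms by auto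
  have s: "a*p + q*T' \<ge> c*T'" using 1 2 3 unfolding c_def by (simp add: algebra_simps)
  have key: "(n+1-\<epsilon>)*(1+e1) \<le> c"
  proof -
    have "c = n+1 - e1*(n+2) + e1*e1" unfolding c_def by (simp add: algebra_simps)
    moreover have "(n+1-\<epsilon>)*(1+e1) = n+1 - \<epsilon> + e1*(n+1) - \<epsilon>*e1" by (simp add: algebra_simps)
    moreover have "e1*(2*n+4) \<ge> 0" using assms by simp
    then have "\<epsilon> \<ge> 0" using assms by linarith
    then have "\<epsilon>*e1 \<ge> 0" using assms by simp
    moreover have "e1*e1 \<ge> 0" by simp
    moreover have "e1*(2*n+4) = e1*(n+2) + e1*(n+1) + e1" by (simp add: algebra_simps)
    ultimately show ?thesis using assms(7,9) by (smt (verit))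
  qed
  have "(n+1-\<epsilon>)*t \<le> c*T'"
  proof (cases "n+1-\<epsilon> \<ge> 0")
    case True
    have "(n+1-\<epsilon>)*t \<le> (n+1-\<epsilon>)*((1+e1)*T')" using True assms by (intro mult_left_mono) auto
    also have "\<dots> = ((n+1-\<epsilon>)*(1+e1))*T'" by simp
    also have "\<dots> \<le> c*T'" using key assms by (intro mult_right_mono) auto
    finally show ?thesis .
  next
    case False
    then have "(n+1-\<epsilon>)*t \<le> 0" using assms by (simp add: mult_nonpos_nonneg)
    also have "0 \<le> c*T'" using c0 assms by simp
    finally show ?thesis .
  qed
  with s show ?thesis by linarith
qed

lemma arith_upper:
  fixes T1 P1 Sg t e1 n \<epsilon> :: real
  assumes "T1 \<le> (1+e1)*t" "P1 \<le> (n+e1)*T1" "Sg \<le> (n+e1)*(e1*t)" "0 \<le> t" "0 < e1" "e1 \<le> 1"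
    "e1*(2*n+4) \<le> \<epsilon>" "n \<ge> 0" "0 \<le> T1"
  shows "T1 + P1 + Sg \<le> (n+1+\<epsilon>)*t"
proof -
  have "T1 + P1 \<le> (n+1+e1)*T1" using assms by (simp add: algebra_simps)
  also have "\<dots> \<le> (n+1+e1)*((1+e1)*t)" using assms by (intro mult_left_mono) auto
  finally have a: "T1 + P1 \<le> (n+1+e1)*(1+e1)*t" by simp
  have b: "(n+1+e1)*(1+e1) + (n+e1)*e1 \<le> n+1+\<epsilon>"
  proof -
    have "e1*e1 \<le> e1" using assms by (simp add: mult_le_one mult_left_le)
    moreover have "(n+1+e1)*(1+e1) + (n+e1)*e1 = n+1 + e1*(2*n+2) + 2*(e1*e1)" by (simp add: algebra_simps)
    moreover have "e1*(2*n+4) = e1*(2*n+2) + 2*e1" by (simp add: algebra_simps)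
    ultimately show ?thesis using assms(7) by (smt (verit))
  qed
  have "T1 + P1 + Sg \<le> ((n+1+e1)*(1+e1) + (n+e1)*e1)*t" using a assms by (simp add: algebra_simps)
  also have "\<dots> \<le> (n+1+\<epsilon>)*t" using b assms by (intro mult_right_mono) auto
  finally show ?thesis .
qed


lemma ev_shift:
  assumes "eventually P (at_top::real filter)"
  shows "eventually (\<lambda>v. P (v + K)) at_top"
proof -
  obtain N where N: "\<forall>t\<ge>N. P t" using assms by (auto simp: eventually_at_top_linorder)
  show ?thesis unfolding eventually_at_top_linorder
    by (rule exI[of _ "N - K"]) (use N in auto)
qed

context iid_rw begin

definition Tl :: "real \<Rightarrow> real" where "Tl t = prob {\<omega>\<in>space M. X 1 \<omega> > t}"

lemma Tl_nonneg: "0 \<le> Tl t" by (simp add: Tl_def)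
lemma Tl_le1: "Tl t \<le> 1" by (simp add: Tl_def)
lemma Tl_anti: "x \<le> y \<Longrightarrow> Tl y \<le> Tl x"
  unfolding Tl_def by (intro finite_measure_mono) auto
lemma PX: "prob {\<omega>\<in>space M. X (Suc n) \<omega> > t} = Tl t"
  using X_dist[of "Suc n" "{t<..}"] by (simp add: Tl_def)

lemma compl_prob:
  assumes "{\<omega>\<in>space M. P \<omega>} \<in> events"
  shows "prob {\<omega>\<in>space M. \<not> P \<omega>} = 1 - prob {\<omega>\<in>space M. P \<omega>}"
proof -
  have "{\<omega>\<in>space M. \<not> P \<omega>} = space M - {\<omega>\<in>space M. P \<omega>}" by auto
  then show ?thesis using assms by (simp add: prob_compl)
qed

lemma step_lower:
  assumes g: "good_tail Tl"
   and IH: "\<forall>\<epsilon>>0. \<forall>\<^sub>F v in at_top. (real n - \<epsilon>) * Tl v \<le> prob {\<omega>\<in>space M. rw_S X n \<omega> > v}"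
  shows "\<forall>\<epsilon>>0. \<forall>\<^sub>F v in at_top. (real (Suc n) - \<epsilon>) * Tl v \<le> prob {\<omega>\<in>space M. rw_S X (Suc n) \<omega> > v}"
proof (intro allI impI)
  fix \<epsilon> :: real assume \<epsilon>: "\<epsilon> > 0"
  define e1 where "e1 = min (1/2) (\<epsilon>/(2*real n+4))"
  have e1: "0 < e1" "e1 \<le> 1/2" "e1*(2*real n+4) \<le> \<epsilon>"
  proof -
    show "0 < e1" using \<epsilon> by (simp add: e1_def)
    show "e1 \<le> 1/2" unfolding e1_def by (rule min.cobounded1)
    have "e1 \<le> \<epsilon>/(2*real n+4)" by (simp add: e1_def)
    then show "e1*(2*real n+4) \<le> \<epsilon>" by (simp add: pos_le_divide_eq)
  qed
  obtain N1 where N1: "\<forall>t\<ge>N1. prob {\<omega>\<in>space M. - X 1 \<omega> > t} \<le> e1"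
    using tail0_ev[of "\<lambda>\<omega>. - X 1 \<omega>" e1] e1 by (auto simp: eventually_at_top_linorder)
  obtain N2 where N2: "\<forall>t\<ge>N2. prob {\<omega>\<in>space M. \<bar>rw_S X n \<omega>\<bar> > t} \<le> e1"
    using tail0_ev[of "\<lambda>\<omega>. \<bar>rw_S X n \<omega>\<bar>" e1] e1 by (auto simp: eventually_at_top_linorder)
  define K where "K = max (max N1 N2) 0 + 1"
  have K: "K > 0" "K-1 \<ge> N1" "K \<ge> N2" unfolding K_def by auto
  have p: "1 - e1 \<le> Tl (-K)"
  proof -
    have "{\<omega>\<in>space M. \<not> X 1 \<omega> > -K} \<subseteq> {\<omega>\<in>space M. - X 1 \<omega> > K - 1}" by auto
    then have "prob {\<omega>\<in>space M. \<not> X 1 \<omega> > -K} \<le> prob {\<omega>\<in>space M. - X 1 \<omega> > K - 1}"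
      by (intro finite_measure_mono) auto
    also have "\<dots> \<le> e1" using N1 K by auto
    finally have "prob {\<omega>\<in>space M. \<not> X 1 \<omega> > -K} \<le> e1" .
    moreover have "prob {\<omega>\<in>space M. \<not> X 1 \<omega> > -K} = 1 - Tl (-K)"
      unfolding Tl_def by (rule compl_prob) measurable
    ultimately show ?thesis by simp
  qed
  have q: "1 - e1 \<le> prob {\<omega>\<in>space M. rw_S X n \<omega> \<in> {-K..K}}"
  proof -
    have a: "prob {\<omega>\<in>space M. \<bar>rw_S X n \<omega>\<bar> > K} \<le> e1" using N2 K by auto
    have b: "prob {\<omega>\<in>space M. \<not> \<bar>rw_S X n \<omega>\<bar> > K} = 1 - prob {\<omega>\<in>space M. \<bar>rw_S X n \<omega>\<bar> > K}"
      by (rule compl_prob) measurable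
    have c: "{\<omega>\<in>space M. \<not> \<bar>rw_S X n \<omega>\<bar> > K} = {\<omega>\<in>space M. rw_S X n \<omega> \<in> {-K..K}}"
      by auto
    show ?thesis using a b c by simp
  qed
  have ev1: "\<forall>\<^sub>F v in at_top. (real n - e1) * Tl (v+K) \<le> prob {\<omega>\<in>space M. rw_S X n \<omega> > v + K}"
    using ev_shift[of _ K] IH e1 by blast
  have ev2: "\<forall>\<^sub>F v in at_top. Tl v \<le> (1+e1) * Tl (v+K)"
    using ev_shift[OF good_tail_LT[OF g Tl_anti e1(1), of K], of K] by simp
  have ev3: "\<forall>\<^sub>F v in at_top. v > (0::real)" by (rule eventually_gt_at_top)
  show "\<forall>\<^sub>F v in at_top. (real (Suc n) - \<epsilon>) * Tl v \<le> prob {\<omega>\<in>space M. rw_S X (Suc n) \<omega> > v}"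
    using ev1 ev2 ev3
  proof eventually_elim
    case (elim v)
    define E1 where "E1 = {\<omega>\<in>space M. rw_S X n \<omega> \<in> {v+K<..} \<and> X (Suc n) \<omega> \<in> {-K<..}}"
    define E2 where "E2 = {\<omega>\<in>space M. rw_S X n \<omega> \<in> {-K..K} \<and> X (Suc n) \<omega> \<in> {v+K<..}}"
    have pE1: "prob E1 = prob {\<omega>\<in>space M. rw_S X n \<omega> > v + K} * Tl (-K)"
      unfolding E1_def using indep_S[of "{v+K<..}" "{-K<..}" n] by (simp add: Tl_def)
    have pE2: "prob E2 = prob {\<omega>\<in>space M. rw_S X n \<omega> \<in> {-K..K}} * Tl (v+K)"
      unfolding E2_def using indep_S[of "{-K..K}" "{v+K<..}" n] by (simp add: Tl_def)
    have sub: "E1 \<union> E2 \<subseteq> {\<omega>\<in>space M. rw_S X (Suc n) \<omega> > v}"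
      using K elim(3) unfolding E1_def E2_def by (auto simp: S_Suc)
    have dis: "E1 \<inter> E2 = {}" using K elim(3) unfolding E1_def E2_def by auto
    have m: "E1 \<in> events" "E2 \<in> events" unfolding E1_def E2_def by measurable
    have "prob E1 + prob E2 = prob (E1 \<union> E2)" using m dis by (simp add: finite_measure_Union)
    also have "\<dots> \<le> prob {\<omega>\<in>space M. rw_S X (Suc n) \<omega> > v}"
      using sub by (intro finite_measure_mono) auto
    finally have le: "prob E1 + prob E2 \<le> prob {\<omega>\<in>space M. rw_S X (Suc n) \<omega> > v}" .
    have "(real n + 1 - \<epsilon>) * Tl v \<le> prob {\<omega>\<in>space M. rw_S X n \<omega> > v + K} * Tl (-K)
        + prob {\<omega>\<in>space M. rw_S X n \<omega> \<in> {-K..K}} * Tl (v+K)"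
      by (rule arith_lower) (use elim e1 p q Tl_nonneg in auto)
    with le pE1 pE2 have "(real n + 1 - \<epsilon>) * Tl v \<le> prob {\<omega>\<in>space M. rw_S X (Suc n) \<omega> > v}" by linarith
    then show ?case by (simp add: add.commute)
  qed
qed


lemma prob_un: "A \<in> events \<Longrightarrow> B \<in> events \<Longrightarrow> prob (A \<union> B) \<le> prob A + prob B"
  by (rule measure_subadditive) (auto simp: emeasure_finite)

lemma step_upper:
  assumes g: "good_tail Tl"
   and IH: "\<forall>\<epsilon>>0. \<forall>\<^sub>F v in at_top. prob {\<omega>\<in>space M. rw_S X n \<omega> > v} \<le> (real n + \<epsilon>) * Tl v"
  shows "\<forall>\<epsilon>>0. \<forall>\<^sub>F v in at_top. prob {\<omega>\<in>space M. rw_S X (Suc n) \<omega> > v} \<le> (real (Suc n) + \<epsilon>) * Tl v"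
proof (intro allI impI)
  fix \<epsilon> :: real assume \<epsilon>: "\<epsilon> > 0"
  define e1 where "e1 = min 1 (\<epsilon>/(2*real n+4))"
  have e1: "0 < e1" "e1 \<le> 1" "e1*(2*real n+4) \<le> \<epsilon>"
  proof -
    show "0 < e1" using \<epsilon> by (simp add: e1_def)
    show "e1 \<le> 1" unfolding e1_def by (rule min.cobounded1)
    have "e1 \<le> \<epsilon>/(2*real n+4)" by (simp add: e1_def)
    then show "e1*(2*real n+4) \<le> \<epsilon>" by (simp add: pos_le_divide_eq)
  qed
  obtain h where h: "filterlim h at_top at_top" "\<forall>\<^sub>F v in at_top. h v \<le> v / 2"
      "\<forall>\<^sub>F v in at_top. Tl (v - h v) \<le> (1+e1) * Tl v"
      "\<forall>\<eta>>0. \<forall>t1. \<forall>\<^sub>F v in at_top. \<exists>Q. finite Q \<and> (\<forall>p\<in>Q. fst p \<ge> t1 \<and> snd p \<ge> t1) \<and>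
          (\<forall>w z. h v < w \<and> h v < z \<and> v < w + z \<longrightarrow> (\<exists>p\<in>Q. fst p < w \<and> snd p < z)) \<and>
          (\<Sum>p\<in>Q. Tl (fst p) * Tl (snd p)) \<le> \<eta> * Tl v"
    using g e1(1) unfolding good_tail_def by blast
  obtain t1 where t1: "\<forall>t\<ge>t1. prob {\<omega>\<in>space M. rw_S X n \<omega> > t} \<le> (real n + e1) * Tl t"
    using IH e1(1) by (auto simp: eventually_at_top_linorder)
  have evQ: "\<forall>\<^sub>F v in at_top. \<exists>Q. finite Q \<and> (\<forall>p\<in>Q. fst p \<ge> t1 \<and> snd p \<ge> t1) \<and>
          (\<forall>w z. h v < w \<and> h v < z \<and> v < w + z \<longrightarrow> (\<exists>p\<in>Q. fst p < w \<and> snd p < z)) \<and>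
          (\<Sum>p\<in>Q. Tl (fst p) * Tl (snd p)) \<le> e1 * Tl v"
    using h(4) e1(1) by blast
  have ev4: "\<forall>\<^sub>F v in at_top. v \<ge> 2*t1" by (rule eventually_ge_at_top)
  show "\<forall>\<^sub>F v in at_top. prob {\<omega>\<in>space M. rw_S X (Suc n) \<omega> > v} \<le> (real (Suc n) + \<epsilon>) * Tl v"
    using h(2) h(3) evQ ev4
  proof eventually_elim
    case (elim v)
    then obtain Q where Q: "finite Q" "\<forall>p\<in>Q. fst p \<ge> t1 \<and> snd p \<ge> t1"
      "\<forall>w z. h v < w \<and> h v < z \<and> v < w + z \<longrightarrow> (\<exists>p\<in>Q. fst p < w \<and> snd p < z)"
      "(\<Sum>p\<in>Q. Tl (fst p) * Tl (snd p)) \<le> e1 * Tl v" by blast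
    define A where "A = {\<omega>\<in>space M. X (Suc n) \<omega> > v - h v}"
    define B where "B = {\<omega>\<in>space M. rw_S X n \<omega> > v - h v}"
    define C where "C p = {\<omega>\<in>space M. rw_S X n \<omega> \<in> {fst p<..} \<and> X (Suc n) \<omega> \<in> {snd p<..}}" for p
    have mA: "A \<in> events" unfolding A_def by measurable
    have mB: "B \<in> events" unfolding B_def by measurable
    have mC: "C p \<in> events" for p unfolding C_def by measurable
    have mU: "(\<Union>p\<in>Q. C p) \<in> events" using Q(1) mC by auto
    have sub: "{\<omega>\<in>space M. rw_S X (Suc n) \<omega> > v} \<subseteq> A \<union> B \<union> (\<Union>p\<in>Q. C p)"
    proof
      fix \<omega> assume w: "\<omega> \<in> {\<omega>\<in>space M. rw_S X (Suc n) \<omega> > v}"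
      show "\<omega> \<in> A \<union> B \<union> (\<Union>p\<in>Q. C p)"
      proof (cases "X (Suc n) \<omega> > v - h v \<or> rw_S X n \<omega> > v - h v")
        case True then show ?thesis using w unfolding A_def B_def by auto
      next
        case False
        have "rw_S X n \<omega> + X (Suc n) \<omega> > v" using w by (simp add: S_Suc)
        with False have "h v < rw_S X n \<omega> \<and> h v < X (Suc n) \<omega> \<and> v < rw_S X n \<omega> + X (Suc n) \<omega>"
          by auto
        then obtain p where "p \<in> Q" "fst p < rw_S X n \<omega>" "snd p < X (Suc n) \<omega>" using Q(3) by blast
        then show ?thesis using w unfolding C_def by auto
      qed
    qed
    have "prob {\<omega>\<in>space M. rw_S X (Suc n) \<omega> > v} \<le> prob (A \<union> B \<union> (\<Union>p\<in>Q. C p))"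
      using sub mA mB mU by (intro finite_measure_mono) auto
    also have "\<dots> \<le> prob (A \<union> B) + prob (\<Union>p\<in>Q. C p)" using mA mB mU by (intro prob_un) auto
    also have "\<dots> \<le> prob A + prob B + prob (\<Union>p\<in>Q. C p)" using prob_un[OF mA mB] by simp
    also have "prob (\<Union>p\<in>Q. C p) \<le> (\<Sum>p\<in>Q. prob (C p))"
      using Q(1) mC by (intro finite_measure_subadditive_finite) auto
    also have "(\<Sum>p\<in>Q. prob (C p)) \<le> (\<Sum>p\<in>Q. (real n + e1) * (Tl (fst p) * Tl (snd p)))"
    proof (intro sum_mono)
      fix p assume p: "p \<in> Q"
      have "prob (C p) = prob {\<omega>\<in>space M. rw_S X n \<omega> > fst p} * Tl (snd p)"
        unfolding C_def using indep_S[of "{fst p<..}" "{snd p<..}" n] by (simp add: Tl_def)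
      also have "\<dots> \<le> (real n + e1) * Tl (fst p) * Tl (snd p)"
        using t1 p Q(2) Tl_nonneg by (intro mult_right_mono) auto
      finally show "prob (C p) \<le> (real n + e1) * (Tl (fst p) * Tl (snd p))" by simp
    qed
    also have "\<dots> = (real n + e1) * (\<Sum>p\<in>Q. Tl (fst p) * Tl (snd p))" by (simp add: sum_distrib_left)
    also have "\<dots> \<le> (real n + e1) * (e1 * Tl v)" using Q(4) e1 by (intro mult_left_mono) auto
    finally have tot: "prob {\<omega>\<in>space M. rw_S X (Suc n) \<omega> > v} \<le> prob A + prob B + (real n + e1) * (e1 * Tl v)"
      by simp
    have pA: "prob A = Tl (v - h v)" unfolding A_def by (rule PX)
    have pB: "prob B \<le> (real n + e1) * Tl (v - h v)" unfolding B_def using t1 elim by auto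
    have "prob A + prob B + (real n + e1) * (e1 * Tl v) \<le> (real n + 1 + \<epsilon>) * Tl v"
      by (rule arith_upper) (use pA pB elim e1 Tl_nonneg in auto)
    with tot show ?case by (simp add: add.commute)
  qed
qed

end


context iid_rw begin

lemma sum_tail:
  assumes g: "good_tail Tl"
  shows "(\<forall>\<epsilon>>0. \<forall>\<^sub>F v in at_top. (real n - \<epsilon>) * Tl v \<le> prob {\<omega>\<in>space M. rw_S X n \<omega> > v}) \<and>
         (\<forall>\<epsilon>>0. \<forall>\<^sub>F v in at_top. prob {\<omega>\<in>space M. rw_S X n \<omega> > v} \<le> (real n + \<epsilon>) * Tl v)"
proof (induction n)
  case 0
  have e: "{\<omega>\<in>space M. rw_S X 0 \<omega> > v} = {}" if "v \<ge> 0" for v using that by auto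
  show ?case
  proof (intro conjI allI impI)
    fix \<epsilon> :: real assume "\<epsilon> > 0"
    show "\<forall>\<^sub>F v in at_top. (real 0 - \<epsilon>) * Tl v \<le> prob {\<omega>\<in>space M. rw_S X 0 \<omega> > v}"
      using eventually_ge_at_top[of "0::real"]
      by eventually_elim (use e \<open>\<epsilon> > 0\<close> Tl_nonneg in auto)
    show "\<forall>\<^sub>F v in at_top. prob {\<omega>\<in>space M. rw_S X 0 \<omega> > v} \<le> (real 0 + \<epsilon>) * Tl v"
      using eventually_ge_at_top[of "0::real"]
      by eventually_elim (use e \<open>\<epsilon> > 0\<close> Tl_nonneg in auto)
  qed
next
  case (Suc n)
  then show ?case using step_lower[OF g] step_upper[OF g] by blast
qed

lemma tau_gt: "enat m < rw_tau X \<omega> \<longleftrightarrow> (\<forall>j\<in>{1..m}. rw_S X j \<omega> > 0)"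
proof (cases "\<exists>n\<ge>1. rw_S X n \<omega> \<le> 0")
  case True
  define L where "L = (LEAST n. n \<ge> 1 \<and> rw_S X n \<omega> \<le> 0)"
  have L: "L \<ge> 1" "rw_S X L \<omega> \<le> 0" using LeastI_ex[OF True] unfolding L_def by auto
  have Lmin: "\<And>j. j \<ge> 1 \<Longrightarrow> rw_S X j \<omega> \<le> 0 \<Longrightarrow> L \<le> j" unfolding L_def by (auto intro: Least_le)
  have "rw_tau X \<omega> = enat L" using True unfolding rw_tau_def L_def by simp
  have "m < L \<longleftrightarrow> (\<forall>j\<in>{1..m}. rw_S X j \<omega> > 0)"
  proof
    assume mL: "m < L"
    show "\<forall>j\<in>{1..m}. rw_S X j \<omega> > 0"
    proof
      fix j assume j: "j \<in> {1..m}"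
      show "rw_S X j \<omega> > 0"
      proof (rule ccontr)
        assume "\<not> rw_S X j \<omega> > 0"
        then have "L \<le> j" using Lmin j by auto
        then show False using mL j by auto
      qed
    qed
  next
    assume a: "\<forall>j\<in>{1..m}. rw_S X j \<omega> > 0"
    show "m < L"
    proof (rule ccontr)
      assume "\<not> m < L"
      then have "L \<in> {1..m}" using L by auto
      then show False using a L by fastforce
    qed
  qed
  with \<open>rw_tau X \<omega> = enat L\<close> show ?thesis by simp
next
  case False
  then show ?thesis unfolding rw_tau_def by auto
qed

lemma sigma_event:
  assumes y: "y > 0" and v: "v > y" and k: "k \<ge> 1"
  shows "(rw_S X k \<omega> > v \<and> rw_sigma X y \<omega> = enat k) \<longleftrightarrow>
         ((\<forall>j\<in>{1..k-1}. 0 < rw_S X j \<omega> \<and> rw_S X j \<omega> \<le> y) \<and> rw_S X k \<omega> > v)"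
proof -
  define P where "P n = (enat n < rw_tau X \<omega> \<and> rw_S X n \<omega> > y)" for n
  have Pe: "P n \<longleftrightarrow> (\<forall>j\<in>{1..n}. rw_S X j \<omega> > 0) \<and> rw_S X n \<omega> > y" for n
    unfolding P_def tau_gt by simp
  have sig: "rw_sigma X y \<omega> = (if \<exists>n. P n then enat (LEAST n. P n) else \<infinity>)"
    unfolding rw_sigma_def P_def by simp
  show ?thesis
  proof
    assume a: "rw_S X k \<omega> > v \<and> rw_sigma X y \<omega> = enat k"
    then have ex: "\<exists>n. P n" using sig by (auto split: if_splits)
    then have lk: "(LEAST n. P n) = k" using a sig by simp
    have Pk: "P k" using LeastI_ex[OF ex] lk by simp
    have "0 < rw_S X j \<omega> \<and> rw_S X j \<omega> \<le> y" if j: "j \<in> {1..k-1}" for j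
    proof -
      have pos: "\<forall>i\<in>{1..j}. rw_S X i \<omega> > 0" using Pk j unfolding Pe by auto
      have "j < k" using j k by auto
      then have "\<not> P j" using not_less_Least[of j P] lk by simp
      then show ?thesis using pos j unfolding Pe by auto
    qed
    then show "(\<forall>j\<in>{1..k-1}. 0 < rw_S X j \<omega> \<and> rw_S X j \<omega> \<le> y) \<and> rw_S X k \<omega> > v" using a by auto
  next
    assume a: "(\<forall>j\<in>{1..k-1}. 0 < rw_S X j \<omega> \<and> rw_S X j \<omega> \<le> y) \<and> rw_S X k \<omega> > v"
    have Pk: "P k" unfolding Pe
    proof
      show "\<forall>j\<in>{1..k}. rw_S X j \<omega> > 0"
      proof
        fix j assume j: "j \<in> {1..k}"
        show "rw_S X j \<omega> > 0"
        proof (cases "j = k")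
          case True then show ?thesis using a y v by auto
        next
          case False then show ?thesis using a j by auto
        qed
      qed
      show "rw_S X k \<omega> > y" using a v by auto
    qed
    have "(LEAST n. P n) = k"
    proof (rule Least_equality[of P k, OF Pk])
      fix m assume Pm: "P m"
      show "k \<le> m"
      proof (rule ccontr)
        assume "\<not> k \<le> m"
        then have mk: "m < k" by simp
        show False
        proof (cases "m = 0")
          case True then show False using Pm y unfolding Pe by auto
        next
          case False then have "m \<in> {1..k-1}" using mk by auto
          then have "rw_S X m \<omega> \<le> y" using a by blast
          then show False using Pm unfolding Pe by auto
        qed
      qed
    qed
    then show "rw_S X k \<omega> > v \<and> rw_sigma X y \<omega> = enat k" using sig Pk a by auto
  qed
qed

definition Gy :: "nat \<Rightarrow> real \<Rightarrow> 'a \<Rightarrow> bool" where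
  "Gy k y \<omega> = (\<forall>j\<in>{1..k-1}. 0 < rw_S X j \<omega> \<and> rw_S X j \<omega> \<le> y)"

lemma G_indep:
  assumes k: "k \<ge> 1"
  shows "prob {\<omega>\<in>space M. Gy k y \<omega> \<and> X k \<omega> > c} = prob {\<omega>\<in>space M. Gy k y \<omega>} * Tl c"
proof -
  define n where "n = k - 1"
  have kn: "k = Suc n" using k unfolding n_def by simp
  define f :: "(nat \<Rightarrow> real) \<Rightarrow> real" where
    "f x = (if (\<forall>j\<in>{1..n}. 0 < (\<Sum>i\<in>{1..j}. x i) \<and> (\<Sum>i\<in>{1..j}. x i) \<le> y) then 1 else 0)" for x
  have fm: "f \<in> borel_measurable (PiM {1..n} (\<lambda>_. borel))"
    unfolding f_def by measurable
  have eq: "f (restrict (\<lambda>i. X i \<omega>) {1..n}) \<in> {1} \<longleftrightarrow> Gy k y \<omega>" for \<omega>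
  proof -
    have "(\<forall>j\<in>{1..n}. 0 < (\<Sum>i\<in>{1..j}. restrict (\<lambda>i. X i \<omega>) {1..n} i) \<and> (\<Sum>i\<in>{1..j}. restrict (\<lambda>i. X i \<omega>) {1..n} i) \<le> y)
       \<longleftrightarrow> Gy k y \<omega>"
      unfolding Gy_def n_def using S_restrict[of _ "k-1" \<omega>] by auto
    then show ?thesis unfolding f_def by auto
  qed
  have "prob {\<omega>\<in>space M. f (restrict (\<lambda>i. X i \<omega>) {1..n}) \<in> {1} \<and> X (Suc n) \<omega> \<in> {c<..}}
      = prob {\<omega>\<in>space M. f (restrict (\<lambda>i. X i \<omega>) {1..n}) \<in> {1}} * prob {\<omega>\<in>space M. X 1 \<omega> \<in> {c<..}}"
    by (rule indep_block[OF fm]) auto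
  then show ?thesis using eq kn by (simp add: Tl_def)
qed

end


context iid_rw begin

lemma choose_K:
  assumes e1: "e1 > 0"
  shows "\<exists>K>0. 1 - e1 \<le> Tl (-K) \<and> 1 - e1 \<le> prob {\<omega>\<in>space M. rw_S X n \<omega> \<in> {-K..K}}"
proof -
  obtain N1 where N1: "\<forall>t\<ge>N1. prob {\<omega>\<in>space M. - X 1 \<omega> > t} \<le> e1"
    using tail0_ev[of "\<lambda>\<omega>. - X 1 \<omega>" e1] e1 by (auto simp: eventually_at_top_linorder)
  obtain N2 where N2: "\<forall>t\<ge>N2. prob {\<omega>\<in>space M. \<bar>rw_S X n \<omega>\<bar> > t} \<le> e1"
    using tail0_ev[of "\<lambda>\<omega>. \<bar>rw_S X n \<omega>\<bar>" e1] e1 by (auto simp: eventually_at_top_linorder)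
  define K where "K = max (max N1 N2) 0 + 1"
  have K: "K > 0" "K-1 \<ge> N1" "K \<ge> N2" unfolding K_def by auto
  have p: "1 - e1 \<le> Tl (-K)"
  proof -
    have "{\<omega>\<in>space M. \<not> X 1 \<omega> > -K} \<subseteq> {\<omega>\<in>space M. - X 1 \<omega> > K - 1}" by auto
    then have "prob {\<omega>\<in>space M. \<not> X 1 \<omega> > -K} \<le> prob {\<omega>\<in>space M. - X 1 \<omega> > K - 1}"
      by (intro finite_measure_mono) auto
    also have "\<dots> \<le> e1" using N1 K by auto
    finally have "prob {\<omega>\<in>space M. \<not> X 1 \<omega> > -K} \<le> e1" .
    moreover have "prob {\<omega>\<in>space M. \<not> X 1 \<omega> > -K} = 1 - Tl (-K)"
      unfolding Tl_def by (rule compl_prob) measurable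
    ultimately show ?thesis by simp
  qed
  have q: "1 - e1 \<le> prob {\<omega>\<in>space M. rw_S X n \<omega> \<in> {-K..K}}"
  proof -
    have a: "prob {\<omega>\<in>space M. \<bar>rw_S X n \<omega>\<bar> > K} \<le> e1" using N2 K by auto
    have b: "prob {\<omega>\<in>space M. \<not> \<bar>rw_S X n \<omega>\<bar> > K} = 1 - prob {\<omega>\<in>space M. \<bar>rw_S X n \<omega>\<bar> > K}"
      by (rule compl_prob) measurable
    have c: "{\<omega>\<in>space M. \<not> \<bar>rw_S X n \<omega>\<bar> > K} = {\<omega>\<in>space M. rw_S X n \<omega> \<in> {-K..K}}"
      by auto
    show ?thesis using a b c by simp
  qed
  show ?thesis using K p q by blast
qed

definition Ginf :: "nat \<Rightarrow> 'a \<Rightarrow> bool" where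
  "Ginf k \<omega> = (\<forall>j\<in>{1..k-1}. 0 < rw_S X j \<omega>)"

lemma G_lim:
  assumes e: "e > 0"
  shows "\<forall>\<^sub>F y in at_top. prob {\<omega>\<in>space M. Ginf k \<omega>} - e \<le> prob {\<omega>\<in>space M. Gy k y \<omega>}"
proof -
  have lim: "((\<lambda>y. \<Sum>j\<in>{1..k-1}. prob {\<omega>\<in>space M. rw_S X j \<omega> > y}) \<longlongrightarrow> 0) at_top"
    by (intro tendsto_null_sum tail0) measurable
  then have "\<forall>\<^sub>F y in at_top. dist (\<Sum>j\<in>{1..k-1}. prob {\<omega>\<in>space M. rw_S X j \<omega> > y}) 0 < e"
    using tendstoD e by blast
  then show ?thesis
  proof eventually_elim
    case (elim y)
    have sub: "{\<omega>\<in>space M. Ginf k \<omega>} \<subseteq> {\<omega>\<in>space M. Gy k y \<omega>} \<union> (\<Union>j\<in>{1..k-1}. {\<omega>\<in>space M. rw_S X j \<omega> > y})"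
      unfolding Ginf_def Gy_def by (auto simp: not_le)
    have mG: "{\<omega>\<in>space M. Gy k y \<omega>} \<in> events" unfolding Gy_def by measurable
    have mU: "(\<Union>j\<in>{1..k-1}. {\<omega>\<in>space M. rw_S X j \<omega> > y}) \<in> events" by measurable
    have "prob {\<omega>\<in>space M. Ginf k \<omega>} \<le> prob ({\<omega>\<in>space M. Gy k y \<omega>} \<union> (\<Union>j\<in>{1..k-1}. {\<omega>\<in>space M. rw_S X j \<omega> > y}))"
      using sub mG mU by (intro finite_measure_mono) auto
    also have "\<dots> \<le> prob {\<omega>\<in>space M. Gy k y \<omega>} + prob (\<Union>j\<in>{1..k-1}. {\<omega>\<in>space M. rw_S X j \<omega> > y})"
      using mG mU by (rule prob_un)
    also have "prob (\<Union>j\<in>{1..k-1}. {\<omega>\<in>space M. rw_S X j \<omega> > y}) \<le> (\<Sum>j\<in>{1..k-1}. prob {\<omega>\<in>space M. rw_S X j \<omega> > y})"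
      by (intro finite_measure_subadditive_finite) auto
    finally show ?case using elim by (simp add: dist_real_def)
  qed
qed

end


context iid_rw begin

theorem main_generic:
  assumes g: "good_tail Tl" and k: "k \<ge> 1"
  shows "\<forall>\<epsilon>>0. \<forall>\<^sub>F y in at_top. \<forall>v>y.
           \<bar>prob {\<omega>\<in>space M. rw_S X k \<omega> > v \<and> rw_sigma X y \<omega> = enat k} / Tl v
            - prob {\<omega>\<in>space M. rw_tau X \<omega> > enat (k - 1)}\<bar> \<le> \<epsilon>"
proof (intro allI impI)
  fix \<epsilon> :: real assume \<epsilon>: "\<epsilon> > 0"
  obtain n where kn: "k = Suc n" using k by (cases k) auto
  have Xk[measurable]: "X k \<in> borel_measurable M" using rvX k by auto
  define PG where "PG = prob {\<omega>\<in>space M. Ginf k \<omega>}"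
  have tauG: "{\<omega>\<in>space M. rw_tau X \<omega> > enat (k - 1)} = {\<omega>\<in>space M. Ginf k \<omega>}"
    unfolding Ginf_def using tau_gt by auto
  have PG01: "0 \<le> PG" "PG \<le> 1" unfolding PG_def by auto
  define e1 where "e1 = min (1/2) (\<epsilon>/(2*real k+4))"
  have e1: "0 < e1" "e1 \<le> 1/2" "e1*(2*real k+4) \<le> \<epsilon>"
  proof -
    show "0 < e1" using \<epsilon> by (simp add: e1_def)
    show "e1 \<le> 1/2" unfolding e1_def by (rule min.cobounded1)
    have "e1 \<le> \<epsilon>/(2*real k+4)" by (simp add: e1_def)
    then show "e1*(2*real k+4) \<le> \<epsilon>" by (simp add: pos_le_divide_eq)
  qed
  obtain K where K: "K > 0" "1 - e1 \<le> Tl (-K)" "1 - e1 \<le> prob {\<omega>\<in>space M. rw_S X n \<omega> \<in> {-K..K}}"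
    using choose_K[OF e1(1), of n] by blast
  have st_k: "\<forall>\<^sub>F v in at_top. prob {\<omega>\<in>space M. rw_S X (Suc n) \<omega> > v} \<le> (real (Suc n) + e1) * Tl v"
    using sum_tail[OF g, of "Suc n"] e1(1) by blast
  have st_n: "\<forall>\<^sub>F v in at_top. (real n - e1) * Tl (v+K) \<le> prob {\<omega>\<in>space M. rw_S X n \<omega> > v + K}"
    using ev_shift[of _ K] sum_tail[OF g, of n] e1(1) by blast
  have c3: "\<forall>\<^sub>F v in at_top. Tl v \<le> (1+e1) * Tl (v+K)"
    using ev_shift[OF good_tail_LT[OF g Tl_anti e1(1), of K], of K] by simp
  have c4: "\<forall>\<^sub>F v in at_top. Tl (v-K) \<le> (1+e1) * Tl v"
    using good_tail_LT[OF g Tl_anti e1(1)] .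
  have c5: "\<forall>\<^sub>F v in at_top. Tl v > 0" using good_tail_pos[OF g] .
  have c6: "\<forall>\<^sub>F v in at_top. v \<ge> K" by (rule eventually_ge_at_top)
  have "\<forall>\<^sub>F v in at_top. prob {\<omega>\<in>space M. rw_S X (Suc n) \<omega> > v} \<le> (real (Suc n) + e1) * Tl v \<and>
      (real n - e1) * Tl (v+K) \<le> prob {\<omega>\<in>space M. rw_S X n \<omega> > v + K} \<and>
      Tl v \<le> (1+e1) * Tl (v+K) \<and> Tl (v-K) \<le> (1+e1) * Tl v \<and> Tl v > 0 \<and> v \<ge> K"
    using st_k st_n c3 c4 c5 c6 by eventually_elim auto
  then obtain V where V: "\<And>v. v \<ge> V \<Longrightarrow> prob {\<omega>\<in>space M. rw_S X (Suc n) \<omega> > v} \<le> (real (Suc n) + e1) * Tl v \<and>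
      (real n - e1) * Tl (v+K) \<le> prob {\<omega>\<in>space M. rw_S X n \<omega> > v + K} \<and>
      Tl v \<le> (1+e1) * Tl (v+K) \<and> Tl (v-K) \<le> (1+e1) * Tl v \<and> Tl v > 0 \<and> v \<ge> K"
    by (auto simp: eventually_at_top_linorder)
  have c7: "\<forall>\<^sub>F y in at_top. PG - \<epsilon> \<le> prob {\<omega>\<in>space M. Gy k y \<omega>}"
    using G_lim[OF \<epsilon>, of k] unfolding PG_def .
  show "\<forall>\<^sub>F y in at_top. \<forall>v>y.
           \<bar>prob {\<omega>\<in>space M. rw_S X k \<omega> > v \<and> rw_sigma X y \<omega> = enat k} / Tl v
            - prob {\<omega>\<in>space M. rw_tau X \<omega> > enat (k - 1)}\<bar> \<le> \<epsilon>"
    using c7 eventually_ge_at_top[of V] eventually_gt_at_top[of "0::real"]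
  proof eventually_elim
    case (elim y)
    show ?case
    proof (intro allI impI)
      fix v assume vy: "v > y"
      then have vV: "v \<ge> V" using elim by auto
      note Vv = V[OF vV]
      have y0: "y > 0" using elim by auto
      define E where "E = {\<omega>\<in>space M. rw_S X k \<omega> > v \<and> rw_sigma X y \<omega> = enat k}"
      have E_eq: "E = {\<omega>\<in>space M. Gy k y \<omega> \<and> rw_S X k \<omega> > v}"
        unfolding E_def Gy_def using sigma_event[OF y0 vy k] by auto
      have Sk: "rw_S X k \<omega> = rw_S X n \<omega> + X (Suc n) \<omega>" for \<omega> using S_Suc[of n \<omega>] kn by simp
      have Snn: "0 \<le> rw_S X n \<omega> \<and> rw_S X n \<omega> \<le> y" if "Gy k y \<omega>" for \<omega>
      proof (cases "n = 0")
        case True then show ?thesis using y0 by simp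
      next
        case False then have "n \<in> {1..k-1}" using kn by auto
        then show ?thesis using that unfolding Gy_def by fastforce
      qed
      have mG: "{\<omega>\<in>space M. Gy k y \<omega>} \<in> events" unfolding Gy_def by measurable
      have PGy: "prob {\<omega>\<in>space M. Gy k y \<omega>} \<le> PG"
        unfolding PG_def Ginf_def Gy_def by (intro finite_measure_mono) auto
      have mE: "E \<in> events" unfolding E_eq Gy_def by measurable
      have Tv: "Tl v > 0" using Vv by auto
      have low: "prob {\<omega>\<in>space M. Gy k y \<omega>} * Tl v \<le> prob E"
      proof -
        have "{\<omega>\<in>space M. Gy k y \<omega> \<and> X k \<omega> > v} \<subseteq> E"
          unfolding E_eq using Sk Snn kn by fastforce
        then have "prob {\<omega>\<in>space M. Gy k y \<omega> \<and> X k \<omega> > v} \<le> prob E"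
          using mE by (intro finite_measure_mono) auto
        then show ?thesis using G_indep[OF k, of y v] by simp
      qed
      define A where "A = {\<omega>\<in>space M. Gy k y \<omega> \<and> X k \<omega> > v - K}"
      define R where "R = {\<omega>\<in>space M. rw_S X n \<omega> \<in> {K<..v} \<and> rw_S X k \<omega> > v}"
      define E1 where "E1 = {\<omega>\<in>space M. rw_S X n \<omega> \<in> {v+K<..} \<and> X (Suc n) \<omega> \<in> {-K<..}}"
      define E2 where "E2 = {\<omega>\<in>space M. rw_S X n \<omega> \<in> {-K..K} \<and> X (Suc n) \<omega> \<in> {v+K<..}}"
      have mA: "A \<in> events" unfolding A_def Gy_def by measurable
      have mR: "R \<in> events" unfolding R_def by measurable
      have m1: "E1 \<in> events" unfolding E1_def by measurable
      have m2: "E2 \<in> events" unfolding E2_def by measurable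
      have EAR: "E \<subseteq> A \<union> R"
      proof
        fix \<omega> assume w: "\<omega> \<in> E"
        show "\<omega> \<in> A \<union> R"
        proof (cases "X k \<omega> > v - K")
          case True then show ?thesis using w unfolding E_eq A_def by auto
        next
          case False
          have G: "Gy k y \<omega>" and s: "rw_S X k \<omega> > v" "\<omega> \<in> space M" using w unfolding E_eq by auto
          have "rw_S X n \<omega> > K" using s Sk[of \<omega>] False kn by auto
          moreover have "rw_S X n \<omega> \<le> v" using Snn[OF G] vy by auto
          ultimately show ?thesis using s unfolding R_def by auto
        qed
      qed
      have pE: "prob E \<le> prob A + prob R"
      proof -
        have "prob E \<le> prob (A \<union> R)" using EAR mA mR by (intro finite_measure_mono) auto
        also have "\<dots> \<le> prob A + prob R" using mA mR by (rule prob_un)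
        finally show ?thesis .
      qed
      have pA: "prob A = prob {\<omega>\<in>space M. Gy k y \<omega>} * Tl (v - K)"
        unfolding A_def by (rule G_indep[OF k])
      have pA2: "prob A \<le> PG * ((1+e1) * Tl v)"
      proof -
        have "prob A \<le> PG * Tl (v - K)" using pA PGy Tl_nonneg by (simp add: mult_right_mono)
        also have "\<dots> \<le> PG * ((1+e1) * Tl v)" using Vv PG01 by (intro mult_left_mono) auto
        finally show ?thesis .
      qed
      have d1: "R \<inter> E1 = {}" using K unfolding R_def E1_def by auto
      have d2: "(R \<union> E1) \<inter> E2 = {}" using K Vv unfolding R_def E1_def E2_def by auto
      have subS: "R \<union> E1 \<union> E2 \<subseteq> {\<omega>\<in>space M. rw_S X (Suc n) \<omega> > v}"
        using K Sk kn unfolding R_def E1_def E2_def by (auto simp: S_Suc)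
      have "prob R + prob E1 + prob E2 = prob (R \<union> E1 \<union> E2)"
        using mR m1 m2 d1 d2 by (simp add: finite_measure_Union)
      also have "\<dots> \<le> prob {\<omega>\<in>space M. rw_S X (Suc n) \<omega> > v}"
        using subS by (intro finite_measure_mono) auto
      also have "\<dots> \<le> (real (Suc n) + e1) * Tl v" using Vv by auto
      finally have RS: "prob R + prob E1 + prob E2 \<le> (real (Suc n) + e1) * Tl v" .
      have pE1: "prob E1 = prob {\<omega>\<in>space M. rw_S X n \<omega> > v + K} * Tl (-K)"
        unfolding E1_def using indep_S[of "{v+K<..}" "{-K<..}" n] by (simp add: Tl_def)
      have pE2: "prob E2 = prob {\<omega>\<in>space M. rw_S X n \<omega> \<in> {-K..K}} * Tl (v+K)"
        unfolding E2_def using indep_S[of "{-K..K}" "{v+K<..}" n] by (simp add: Tl_def)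
      have "(real n + 1 - e1*(2*real n+4)) * Tl v \<le> prob {\<omega>\<in>space M. rw_S X n \<omega> > v + K} * Tl (-K)
          + prob {\<omega>\<in>space M. rw_S X n \<omega> \<in> {-K..K}} * Tl (v+K)"
        by (rule arith_lower) (use Vv e1 K Tl_nonneg in auto)
      then have E12: "(real n + 1 - e1*(2*real n+4)) * Tl v \<le> prob E1 + prob E2" using pE1 pE2 by simp
      have pR: "prob R \<le> (e1 + e1*(2*real n+4)) * Tl v"
        using RS E12 by (simp add: algebra_simps)
      have up: "prob E \<le> (PG + \<epsilon>) * Tl v"
      proof -
        have "prob E \<le> PG * ((1+e1) * Tl v) + (e1 + e1*(2*real n+4)) * Tl v" using pE pA2 pR by linarith
        also have "\<dots> = (PG + (PG*e1 + e1 + e1*(2*real n+4))) * Tl v" by (simp add: algebra_simps)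
        also have "\<dots> \<le> (PG + \<epsilon>) * Tl v"
        proof (intro mult_right_mono)
          have "PG*e1 \<le> e1" using PG01 e1 by (simp add: mult_left_le_one_le)
          moreover have "e1*(2*real k+4) = e1*(2*real n + 4) + 2*e1" using kn by (simp add: algebra_simps)
          ultimately show "PG + (PG*e1 + e1 + e1*(2*real n+4)) \<le> PG + \<epsilon>" using e1 by linarith
        qed (use Tl_nonneg in auto)
        finally show ?thesis .
      qed
      have r1: "prob E / Tl v \<le> PG + \<epsilon>" using up Tv by (simp add: pos_divide_le_eq)
      have "(PG - \<epsilon>) * Tl v \<le> prob {\<omega>\<in>space M. Gy k y \<omega>} * Tl v"
        using elim Tv by (intro mult_right_mono) auto
      with low have "(PG - \<epsilon>) * Tl v \<le> prob E" by linarith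
      then have r2: "PG - \<epsilon> \<le> prob E / Tl v" using Tv by (simp add: pos_le_divide_eq)
      show "\<bar>prob {\<omega>\<in>space M. rw_S X k \<omega> > v \<and> rw_sigma X y \<omega> = enat k} / Tl v
            - prob {\<omega>\<in>space M. rw_tau X \<omega> > enat (k - 1)}\<bar> \<le> \<epsilon>"
        using r1 r2 tauG unfolding E_def PG_def by (simp add: abs_le_iff)
    qed
  qed
qed

end


locale gfun =
  fixes g :: "real \<Rightarrow> real" and \<beta> :: real
  assumes \<beta>: "0 < \<beta>" "\<beta> < 1/2"
    and gmono: "mono_on {0<..} g"
    and ganti: "antimono_on {0<..} (\<lambda>x. g x / x powr \<beta>)"
begin

lemma gM: "0 < x \<Longrightarrow> x \<le> y \<Longrightarrow> g x \<le> g y"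
  using mono_onD[OF gmono, of x y] by auto

lemma gA: "0 < x \<Longrightarrow> x \<le> y \<Longrightarrow> g y / y powr \<beta> \<le> g x / x powr \<beta>"
  using monotone_onD[OF ganti, of x y] by auto

lemma g_up: assumes "0 < x" "x \<le> y" shows "g y \<le> g x * (y/x) powr \<beta>"
proof -
  have yp: "y powr \<beta> > 0" using assms by simp
  have "g y = g y / y powr \<beta> * y powr \<beta>" using yp by simp
  also have "\<dots> \<le> g x / x powr \<beta> * y powr \<beta>" using gA[OF assms] yp by (intro mult_right_mono) auto
  also have "\<dots> = g x * (y/x) powr \<beta>" by (simp add: powr_divide)
  finally show ?thesis .
qed

lemma gpos: assumes "x > 0" shows "g x \<ge> 0"
proof (rule ccontr)
  assume "\<not> g x \<ge> 0"
  then have neg: "g x < 0" by simp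
  have "g x \<le> g (2*x)" using assms by (intro gM) auto
  also have "\<dots> \<le> g x * (2*x/x) powr \<beta>" using assms by (intro g_up) auto
  also have "\<dots> = g x * 2 powr \<beta>" using assms by simp
  also have "\<dots> < g x"
  proof -
    have "2 powr \<beta> > 1" using \<beta> by simp
    then show ?thesis using neg by (simp add: mult_less_cancel_left_neg)
  qed
  finally show False by simp
qed

lemma g_growth: assumes "1 \<le> y" shows "g y \<le> g 1 * y powr \<beta>"
  using g_up[of 1 y] assms by simp

lemma g_half: assumes "v > 0" shows "g v \<le> 2 * g (v/2)"
proof -
  have "g v \<le> g (v/2) * (v/(v/2)) powr \<beta>" using assms by (intro g_up) auto
  also have "\<dots> = g (v/2) * 2 powr \<beta>" using assms by simp
  also have "\<dots> \<le> g (v/2) * 2 powr 1" using assms gpos[of "v/2"] \<beta>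
    by (intro mult_left_mono powr_mono) auto
  finally show ?thesis by simp
qed

lemma g_diff: assumes x: "0 < x" "2*x \<le> v" shows "g v - g (v - x) \<le> g (x/2)"
proof -
  have v: "v > 0" using x by simp
  have vx: "0 < v - x" "v - x \<le> v" using x by auto
  have gv: "g v \<ge> 0" using gpos v by simp
  have "g v / v powr \<beta> \<le> g (v-x) / (v-x) powr \<beta>" using gA[OF vx] .
  then have "g v / v powr \<beta> * (v-x) powr \<beta> \<le> g (v-x)" using vx by (simp add: pos_le_divide_eq)
  then have a: "g v * ((v-x)/v) powr \<beta> \<le> g (v-x)" by (simp add: powr_divide)
  have b: "(v-x)/v \<le> ((v-x)/v) powr \<beta>"
  proof -
    have "((v-x)/v) powr 1 \<le> ((v-x)/v) powr \<beta>" using vx v \<beta> by (intro powr_mono') auto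
    then show ?thesis using vx v by simp
  qed
  have c: "g v - g (v - x) \<le> g v * (x/v)"
  proof -
    have "g v * ((v-x)/v) \<le> g v * ((v-x)/v) powr \<beta>" using b gv by (intro mult_left_mono) auto
    with a have "g v * ((v-x)/v) \<le> g (v-x)" by linarith
    moreover have "g v * ((v-x)/v) = g v - g v * (x/v)" using v by (simp add: field_simps)
    ultimately show ?thesis by linarith
  qed
  have d: "g v \<le> g (x/2) * ((2 * v)/x) powr \<beta>"
  proof -
    have "g v \<le> g (x/2) * (v/(x/2)) powr \<beta>" using x by (intro g_up) auto
    then show ?thesis by (simp add: mult.commute)
  qed
  have e: "((2 * v)/x) powr \<beta> * (x/v) \<le> 1"
  proof -
    define u where "u = v/x"
    have u2: "u \<ge> 2" using x unfolding u_def by (simp add: le_divide_eq)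
    have "(2*u) powr \<beta> \<le> (2*u) powr (1/2)" using u2 \<beta> by (intro powr_mono) auto
    also have "\<dots> = sqrt (2*u)" using u2 by (simp add: powr_half_sqrt)
    also have "\<dots> \<le> u"
    proof -
      have "2*u \<le> u^2" using u2 by (simp add: power2_eq_square)
      then have "sqrt (2*u) \<le> sqrt (u^2)" by (rule real_sqrt_le_mono)
      then show ?thesis using u2 by simp
    qed
    finally have "(2*u) powr \<beta> \<le> u" .
    moreover have "(2 * v)/x = 2*u" "x/v = 1/u" unfolding u_def using x by auto
    ultimately show ?thesis using u2 by (simp add: divide_le_eq)
  qed
  have "g v * (x/v) \<le> g (x/2) * ((2 * v)/x) powr \<beta> * (x/v)" using d x v by (intro mult_right_mono) auto
  also have "\<dots> \<le> g (x/2) * 1"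
    using e gpos[of "x/2"] x by (simp only: mult.assoc, intro mult_left_mono) auto
  finally show ?thesis using c by simp
qed

end


locale tailb = gfun +
  fixes T :: "real \<Rightarrow> real" and \<kappa> :: real
  assumes \<kappa>: "\<kappa> > 0"
    and Tanti: "\<And>x y. x \<le> y \<Longrightarrow> T y \<le> T x"
    and Tnn: "\<And>x. T x \<ge> 0"
    and Teq: "T \<sim>[at_top] (\<lambda>x. x powr (-\<kappa>) * exp (- g x))"
begin

definition \<phi> :: "real \<Rightarrow> real" where "\<phi> x = x powr (-\<kappa>) * exp (- g x)"

lemma \<phi>_pos: "x > 0 \<Longrightarrow> \<phi> x > 0" unfolding \<phi>_def by simp

lemma ratio: "((\<lambda>x. T x / \<phi> x) \<longlongrightarrow> 1) at_top"
proof -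
  have a: "((\<lambda>x. if T x = 0 \<and> \<phi> x = 0 then 1 else T x / \<phi> x) \<longlongrightarrow> 1) at_top"
    using asymp_equivD[OF Teq] unfolding \<phi>_def[abs_def] .
  have "\<forall>\<^sub>F x in at_top. (if T x = 0 \<and> \<phi> x = 0 then 1 else T x / \<phi> x) = T x / \<phi> x"
    using eventually_gt_at_top[of "0::real"] by eventually_elim (auto dest: \<phi>_pos)
  then show ?thesis using a by (rule Lim_transform_eventually[rotated])
qed

lemma bounds: "\<exists>x0\<ge>1. \<forall>x\<ge>x0. \<phi> x / 2 \<le> T x \<and> T x \<le> 2 * \<phi> x"
proof -
  have "\<forall>\<^sub>F x in at_top. dist (T x / \<phi> x) 1 < 1/2" using tendstoD[OF ratio, of "1/2"] by simp
  moreover have "\<forall>\<^sub>F x in at_top. x \<ge> (1::real)" by (rule eventually_ge_at_top)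
  ultimately have "\<forall>\<^sub>F x in at_top. x \<ge> 1 \<and> \<phi> x / 2 \<le> T x \<and> T x \<le> 2 * \<phi> x"
  proof eventually_elim
    case (elim x)
    then have p: "\<phi> x > 0" using \<phi>_pos by simp
    from elim have "\<bar>T x / \<phi> x - 1\<bar> < 1/2" by (simp add: dist_real_def)
    then have "1/2 < T x / \<phi> x \<and> T x / \<phi> x < 3/2" unfolding abs_less_iff by linarith
    then have "1/2 < T x / \<phi> x" "T x / \<phi> x < 3/2" by auto
    then have "\<phi> x / 2 < T x" "T x < 3/2 * \<phi> x" using p by (simp_all add: field_simps)
    then show ?case using elim p by auto
  qed
  then obtain N where N: "\<forall>x\<ge>N. x \<ge> 1 \<and> \<phi> x / 2 \<le> T x \<and> T x \<le> 2 * \<phi> x"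
    by (auto simp: eventually_at_top_linorder)
  show ?thesis by (rule exI[of _ "max N 1"]) (use N in auto)
qed

lemma Tpos_ev: "\<forall>\<^sub>F v in at_top. T v > 0"
proof -
  obtain x0 where x0: "x0 \<ge> 1" "\<forall>x\<ge>x0. \<phi> x / 2 \<le> T x \<and> T x \<le> 2 * \<phi> x" using bounds by blast
  show ?thesis using eventually_ge_at_top[of x0]
  proof eventually_elim
    case (elim v)
    then have "\<phi> v > 0" using x0 \<phi>_pos by simp
    then show ?case using x0 elim by force
  qed
qed

definition \<gamma> :: real where "\<gamma> = (1 - \<beta>)/2"
definition hh :: "real \<Rightarrow> real" where "hh v = v powr \<gamma>"

lemma \<gamma>: "0 < \<gamma>" "\<gamma> < 1" "\<beta> + \<gamma> < 1" using \<beta> unfolding \<gamma>_def by (auto simp: field_simps)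

lemma hh_lim: "filterlim hh at_top at_top"
  unfolding hh_def using \<gamma> by real_asymp

lemma hh_half: "\<forall>\<^sub>F v in at_top. hh v \<le> v / 2"
  unfolding hh_def using \<gamma> by real_asymp

lemma vmh_lim: "filterlim (\<lambda>v. v - hh v) at_top at_top"
  unfolding hh_def using \<gamma> by real_asymp

lemma phi_quot: assumes "a > 0" "v > 0" shows "\<phi> a / \<phi> v = (v/a) powr \<kappa> * exp (g v - g a)"
  using assms unfolding \<phi>_def by (simp add: powr_minus powr_divide exp_diff field_simps exp_minus)


lemma gdiff_lim: "((\<lambda>v. g v - g (v - hh v)) \<longlongrightarrow> 0) at_top"
proof (rule tendsto_sandwich[of "\<lambda>_. 0" _ _ "\<lambda>v. 2 * g 1 * (v powr \<beta> * v powr \<gamma> / v)"])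
  have ev: "\<forall>\<^sub>F v in at_top. v \<ge> 2 \<and> hh v \<le> v / 2"
    using eventually_ge_at_top[of "2::real"] hh_half by eventually_elim auto
  show "\<forall>\<^sub>F v in at_top. 0 \<le> g v - g (v - hh v)"
    using ev
  proof eventually_elim
    case (elim v)
    have "hh v \<ge> 0" unfolding hh_def by simp
    then have "g (v - hh v) \<le> g v" using elim by (intro gM) auto
    then show ?case by simp
  qed
  show "\<forall>\<^sub>F v in at_top. g v - g (v - hh v) \<le> 2 * g 1 * (v powr \<beta> * v powr \<gamma> / v)"
    using ev
  proof eventually_elim
    case (elim v)
    define a where "a = v - hh v"
    have h0: "hh v \<ge> 0" unfolding hh_def by simp
    have a: "a \<ge> v/2" "a > 0" "a \<le> v" using elim h0 unfolding a_def by auto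
    have va: "v/a \<ge> 1" using a by simp
    have "g v \<le> g a * (v/a) powr \<beta>" using a by (intro g_up) auto
    also have "\<dots> \<le> g a * (v/a) powr 1" using va \<beta> gpos[of a] a
      by (intro mult_left_mono powr_mono) auto
    also have "\<dots> = g a + g a * (hh v / a)" using a unfolding a_def by (simp add: field_simps)
    finally have 1: "g v - g a \<le> g a * (hh v / a)" by simp
    have 2: "g a \<le> g v" using a by (intro gM) auto
    have 3: "hh v / a \<le> 2 * hh v / v"
    proof -
      have "v * hh v \<le> (a*2) * hh v" using a h0 by (intro mult_right_mono) auto
      then show ?thesis using a elim by (simp add: field_simps)
    qed
    have 4: "g v \<le> g 1 * v powr \<beta>" using elim by (intro g_growth) auto
    have "g a * (hh v / a) \<le> g v * (2 * hh v / v)"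
      using 2 3 gpos[of a] a h0 elim by (intro mult_mono) auto
    also have "\<dots> \<le> g 1 * v powr \<beta> * (2 * hh v / v)" using 4 h0 elim by (intro mult_right_mono) auto
    also have "\<dots> = 2 * g 1 * (v powr \<beta> * v powr \<gamma> / v)" unfolding hh_def by simp
    finally show ?case using 1 unfolding a_def by simp
  qed
  show "((\<lambda>v. 2 * g 1 * (v powr \<beta> * v powr \<gamma> / v)) \<longlongrightarrow> 0) at_top"
    using \<gamma> \<beta> by real_asymp
qed (simp)

lemma insens:
  assumes e: "\<epsilon> > 0"
  shows "\<forall>\<^sub>F v in at_top. T (v - hh v) \<le> (1+\<epsilon>) * T v"
proof -
  define \<rho> where "\<rho> x = T x / \<phi> x" for x
  have r1: "((\<lambda>v. \<rho> (v - hh v)) \<longlongrightarrow> 1) at_top"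
    unfolding \<rho>_def using filterlim_compose[OF ratio vmh_lim] by simp
  have r2: "((\<lambda>v. \<rho> v) \<longlongrightarrow> 1) at_top" unfolding \<rho>_def by (rule ratio)
  have r3: "((\<lambda>v. (v/(v - hh v)) powr \<kappa>) \<longlongrightarrow> 1) at_top"
    unfolding hh_def using \<gamma> \<kappa> by real_asymp
  have r4: "((\<lambda>v. exp (g v - g (v - hh v))) \<longlongrightarrow> exp 0) at_top"
    by (intro tendsto_intros gdiff_lim)
  have lim: "((\<lambda>v. \<rho> (v - hh v) / \<rho> v * ((v/(v - hh v)) powr \<kappa> * exp (g v - g (v - hh v)))) \<longlongrightarrow> 1 / 1 * (1 * exp 0)) at_top"
    by (intro tendsto_intros r1 r2 r3 r4) simp
  have "\<forall>\<^sub>F v in at_top. T (v - hh v) / T v = \<rho> (v - hh v) / \<rho> v * ((v/(v - hh v)) powr \<kappa> * exp (g v - g (v - hh v)))"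
    using eventually_ge_at_top[of "2::real"] hh_half Tpos_ev vmh_lim[unfolded filterlim_at_top, rule_format, of 1]
  proof eventually_elim
    case (elim v)
    have a: "v - hh v > 0" using elim by auto
    have v: "v > 0" using elim by auto
    have pa: "\<phi> (v - hh v) > 0" using \<phi>_pos[OF a] .
    have pv: "\<phi> v > 0" using \<phi>_pos[OF v] .
    show ?case unfolding \<rho>_def phi_quot[OF a v, symmetric] using pa pv elim by (simp add: field_simps)
  qed
  then have lim2: "((\<lambda>v. T (v - hh v) / T v) \<longlongrightarrow> 1) at_top"
    using lim by (simp add: tendsto_cong)
  have "\<forall>\<^sub>F v in at_top. T (v - hh v) / T v < 1 + \<epsilon>"
    using order_tendstoD(2)[OF lim2] e by simp
  with Tpos_ev show ?thesis
    by eventually_elim (simp add: divide_less_eq)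
qed

end


lemma geo_sum: fixes r :: real assumes "r > 1"
  shows "(\<Sum>j<N. r^(j+1)) \<le> r^(N+1) / (r - 1)"
proof (induction N)
  case 0 then show ?case using assms by simp
next
  case (Suc N)
  have "(\<Sum>j<Suc N. r^(j+1)) = (\<Sum>j<N. r^(j+1)) + r^(N+1)" by simp
  also have "\<dots> \<le> r^(N+1)/(r-1) + r^(N+1)" using Suc by simp
  also have "\<dots> = r^(Suc N+1)/(r-1)" using assms by (simp add: field_simps)
  finally show ?case .
qed

lemma sum_Un_le_nn:
  fixes f :: "'a \<Rightarrow> real"
  assumes "finite A" "finite B" "\<And>x. x \<in> A \<union> B \<Longrightarrow> f x \<ge> 0"
  shows "sum f (A \<union> B) \<le> sum f A + sum f B"
proof -
  have "sum f (A \<union> B) = sum f A + sum f B - sum f (A \<inter> B)" using assms by (simp add: sum_Un)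
  moreover have "sum f (A \<inter> B) \<ge> 0" using assms by (intro sum_nonneg) auto
  ultimately show ?thesis by simp
qed

context tailb begin

definition rr :: real where "rr = 2 powr \<kappa>"
lemma rr: "rr > 1" unfolding rr_def using \<kappa> by simp

lemma powr_top: assumes "v > 0" shows "(v / 2^m) powr (-\<kappa>) = v powr (-\<kappa>) * rr^m"
proof -
  have "(2::real)^m = 2 powr (real m)" by (simp add: powr_realpow)
  then have "((2::real)^m) powr (-\<kappa>) = 2 powr (real m * -\<kappa>)" by (simp add: powr_powr)
  also have "\<dots> = inverse (rr^m)" unfolding rr_def
    by (simp add: powr_power powr_minus[symmetric] mult.commute)
  finally have a: "((2::real)^m) powr (-\<kappa>) = inverse (rr^m)" .
  have "(v / 2^m) powr (-\<kappa>) = v powr (-\<kappa>) / ((2::real)^m) powr (-\<kappa>)" by (rule powr_divide)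
  also have "\<dots> = v powr (-\<kappa>) * rr^m" using a by (simp add: divide_inverse)
  finally show ?thesis .
qed

lemma pair_bound:
  assumes x0: "\<forall>x\<ge>x0. \<phi> x / 2 \<le> T x \<and> T x \<le> 2 * \<phi> x" "x0 \<ge> 1"
    and x: "0 < x" "2*x \<le> v" "x/2 \<ge> x0"
  shows "T (x/2) * T (v - x) \<le> 8 * rr^2 * x powr (-\<kappa>) * T v"
proof -
  have v: "v > 0" "v \<ge> x0" "v - x \<ge> x0" "v - x \<ge> v/2" using x x0 by auto
  have t1: "T (x/2) \<le> 2 * \<phi> (x/2)" using x0 x by auto
  have t2: "T (v - x) \<le> 2 * \<phi> (v - x)" using x0 v by auto
  have t3: "\<phi> v \<le> 2 * T v" using x0 v by force
  have p1: "(x/2) powr (-\<kappa>) = x powr (-\<kappa>) * rr"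
    using powr_top[OF x(1), of 1] by simp
  have p2: "(v - x) powr (-\<kappa>) \<le> v powr (-\<kappa>) * rr"
  proof -
    have "(v - x) powr (-\<kappa>) \<le> (v/2) powr (-\<kappa>)" using v \<kappa> by (intro powr_mono2') auto
    also have "\<dots> = v powr (-\<kappa>) * rr" using powr_top[OF v(1), of 1] by simp
    finally show ?thesis .
  qed
  have e: "exp (- g (x/2)) * exp (- g (v - x)) \<le> exp (- g v)"
  proof -
    have "g v - g (v - x) \<le> g (x/2)" using g_diff x by simp
    then show ?thesis by (simp add: exp_add[symmetric])
  qed
  have "\<phi> (x/2) * \<phi> (v - x) = (x/2) powr (-\<kappa>) * (v - x) powr (-\<kappa>) * (exp (- g (x/2)) * exp (- g (v - x)))"
    unfolding \<phi>_def by simp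
  also have "\<dots> \<le> (x powr (-\<kappa>) * rr) * (v powr (-\<kappa>) * rr) * exp (- g v)"
    using p1 p2 e rr by (intro mult_mono) auto
  also have "\<dots> = rr^2 * x powr (-\<kappa>) * \<phi> v" unfolding \<phi>_def by (simp add: power2_eq_square)
  finally have pp: "\<phi> (x/2) * \<phi> (v - x) \<le> rr^2 * x powr (-\<kappa>) * \<phi> v" .
  have "T (x/2) * T (v - x) \<le> (2 * \<phi> (x/2)) * (2 * \<phi> (v - x))"
    using t1 t2 Tnn \<phi>_pos[of "x/2"] x by (intro mult_mono) auto
  also have "\<dots> = 4 * (\<phi> (x/2) * \<phi> (v - x))" by simp
  also have "\<dots> \<le> 4 * (rr^2 * x powr (-\<kappa>) * \<phi> v)" using pp by simp
  also have "\<dots> \<le> 4 * (rr^2 * x powr (-\<kappa>) * (2 * T v))" using t3 rr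
    by (intro mult_left_mono) auto
  finally show ?thesis by simp
qed

lemma last_bound:
  assumes x0: "\<forall>x\<ge>x0. \<phi> x / 2 \<le> T x \<and> T x \<le> 2 * \<phi> x" "x0 \<ge> 1"
    and v: "v/2 \<ge> x0"
  shows "T (v/2) * T (v/2) \<le> 8 * rr^2 * v powr (-\<kappa>) * T v"
proof -
  have vp: "v > 0" "v \<ge> x0" using v x0 by auto
  have t1: "T (v/2) \<le> 2 * \<phi> (v/2)" using x0 v by auto
  have t3: "\<phi> v \<le> 2 * T v" using x0 vp by force
  have p1: "(v/2) powr (-\<kappa>) = v powr (-\<kappa>) * rr" using powr_top[OF vp(1), of 1] by simp
  have e: "exp (- g (v/2)) * exp (- g (v/2)) \<le> exp (- g v)"
    using g_half[OF vp(1)] by (simp add: exp_add[symmetric])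
  have "\<phi> (v/2) * \<phi> (v/2) = (v/2) powr (-\<kappa>) * (v/2) powr (-\<kappa>) * (exp (- g (v/2)) * exp (- g (v/2)))"
    unfolding \<phi>_def by simp
  also have "\<dots> \<le> (v powr (-\<kappa>) * rr) * (v powr (-\<kappa>) * rr) * exp (- g v)"
    using p1 e rr by (intro mult_mono) auto
  also have "\<dots> = rr^2 * v powr (-\<kappa>) * \<phi> v" unfolding \<phi>_def by (simp add: power2_eq_square)
  finally have pp: "\<phi> (v/2) * \<phi> (v/2) \<le> rr^2 * v powr (-\<kappa>) * \<phi> v" .
  have "T (v/2) * T (v/2) \<le> (2 * \<phi> (v/2)) * (2 * \<phi> (v/2))"
    using t1 Tnn \<phi>_pos[of "v/2"] vp by (intro mult_mono) auto
  also have "\<dots> = 4 * (\<phi> (v/2) * \<phi> (v/2))" by simp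
  also have "\<dots> \<le> 4 * (rr^2 * v powr (-\<kappa>) * \<phi> v)" using pp by simp
  also have "\<dots> \<le> 4 * (rr^2 * v powr (-\<kappa>) * (2 * T v))" using t3 rr
    by (intro mult_left_mono) auto
  finally show ?thesis by simp
qed

end


context tailb begin

lemma find_piece:
  fixes v h w :: real
  assumes v: "v > 0" and hw: "h < w" "w \<le> v/2" and h: "h > 0"
    and N: "\<And>j. j < N \<Longrightarrow> h < v / 2^(j+1)" "v / 2^(N+1) \<le> h"
  shows "\<exists>j<N. v / 2^(j+1) / 2 < w \<and> w \<le> v / 2^(j+1)"
proof -
  define top where "top j = v / 2^(j+1)" for j :: nat
  have topdec: "top j \<le> top i" if "i \<le> j" for i j
    unfolding top_def using v that by (intro divide_left_mono) (auto intro: power_increasing)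
  have tophalf: "top j / 2 = top (Suc j)" for j unfolding top_def by simp
  have w0: "w > 0" using hw h by simp
  obtain n where n: "v / w < 2^n" using real_arch_pow[of 2 "v/w"] by auto
  have ex: "top n / 2 < w"
  proof -
    have "v < w * 2^n" using n w0 by (simp add: divide_less_eq mult.commute)
    then have "v / 2^n < w" by (simp add: divide_less_eq mult.commute)
    moreover have "top n / 2 \<le> v / 2^n"
    proof -
      have eq: "top n / 2 = (v / 2^n) / 4" unfolding top_def by (simp add: power_add)
      have "v / 2^n > 0" using v by simp
      then show ?thesis unfolding eq by simp
    qed
    ultimately show ?thesis by linarith
  qed
  define jw where "jw = (LEAST j. top j / 2 < w)"
  have j1: "top jw / 2 < w" unfolding jw_def by (rule LeastI[of _ n]) (rule ex)
  have j2: "w \<le> top jw"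
  proof (cases jw)
    case 0 then show ?thesis using hw unfolding top_def by simp
  next
    case (Suc i)
    then have "i < jw" by simp
    then have "\<not> top i / 2 < w" unfolding jw_def by (rule not_less_Least)
    then show ?thesis using tophalf[of i] Suc by simp
  qed
  have j3: "jw < N"
  proof (rule ccontr)
    assume "\<not> jw < N"
    then have "top jw \<le> top N" by (intro topdec) simp
    also have "top N \<le> h" using N(2) unfolding top_def .
    finally show False using j2 hw by simp
  qed
  show ?thesis using j1 j2 j3 unfolding top_def by blast
qed

lemma tbj:
  assumes \<eta>: "\<eta> > 0"
  shows "\<forall>\<^sub>F v in at_top. \<exists>Q. finite Q \<and> (\<forall>p\<in>Q. fst p \<ge> t1 \<and> snd p \<ge> t1) \<and>
          (\<forall>w z. hh v < w \<and> hh v < z \<and> v < w + z \<longrightarrow> (\<exists>p\<in>Q. fst p < w \<and> snd p < z)) \<and>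
          (\<Sum>p\<in>Q. T (fst p) * T (snd p)) \<le> \<eta> * T v"
proof -
  obtain x0 where x0: "x0 \<ge> 1" "\<forall>x\<ge>x0. \<phi> x / 2 \<le> T x \<and> T x \<le> 2 * \<phi> x" using bounds by blast
  define D where "D v = 8*rr^2*(2*(hh v powr (-\<kappa>))*rr/(rr-1) + v powr (-\<kappa>))" for v
  have l1: "((\<lambda>v. hh v powr (-\<kappa>)) \<longlongrightarrow> 0) at_top" unfolding hh_def using \<gamma> \<kappa> by real_asymp
  have l2: "((\<lambda>v. v powr (-\<kappa>)) \<longlongrightarrow> 0) at_top" using \<kappa> by real_asymp
  have "(D \<longlongrightarrow> 8*rr^2*(2*0*rr/(rr-1) + 0)) at_top"
    unfolding D_def using rr by (intro tendsto_intros l1 l2) auto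
  then have evD: "\<forall>\<^sub>F v in at_top. D v < \<eta>" using \<eta> by (intro order_tendstoD(2)) auto
  have evh: "\<forall>\<^sub>F v in at_top. hh v \<ge> max (2*x0) (2*t1)" using hh_lim unfolding filterlim_at_top by blast
  show ?thesis using evD evh hh_half eventually_ge_at_top[of "max 1 (2*t1)"]
  proof eventually_elim
    case (elim v)
    have v: "v > 0" "v \<ge> 2*t1" using elim by auto
    have hv: "hh v \<ge> 2*x0" "hh v \<ge> 2*t1" "hh v \<le> v/2" using elim by auto
    have hp: "hh v > 0" using hv x0 by simp
    define top where "top j = v / 2^(j+1)" for j :: nat
    have topdec: "top j \<le> top i" if "i \<le> j" for i j
      unfolding top_def using v that by (intro divide_left_mono) (auto intro: power_increasing)
    have top_le: "top j \<le> v/2" for j using topdec[of 0 j] unfolding top_def by simp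
    have top_pos: "top j > 0" for j unfolding top_def using v by simp
    obtain n where n: "v / hh v < 2^n" using real_arch_pow[of 2 "v / hh v"] by auto
    have exN: "top n \<le> hh v"
    proof -
      have "v < hh v * 2^n" using n hp by (simp add: divide_less_eq mult.commute)
      then have "v / 2^n < hh v" by (simp add: divide_less_eq mult.commute)
      moreover have "top n \<le> v / 2^n"
      proof -
        have eq: "top n = (v / 2^n) / 2" unfolding top_def by (simp add: power_add)
        have "v / 2^n > 0" using v by simp
        then show ?thesis unfolding eq by simp
      qed
      ultimately show ?thesis by simp
    qed
    define N where "N = (LEAST j. top j \<le> hh v)"
    have N1: "top N \<le> hh v" unfolding N_def by (rule LeastI[of _ n]) (rule exN)
    have N2: "hh v < top j" if "j < N" for j
      using not_less_Least[of j "\<lambda>j. top j \<le> hh v"] that unfolding N_def by simp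
    have vN: "hh v \<le> v / 2^N"
    proof (cases N)
      case 0 then show ?thesis using hv v by simp
    next
      case (Suc M)
      then have "hh v < top M" using N2 by simp
      then show ?thesis using Suc unfolding top_def by simp
    qed
    define Q1 where "Q1 = (\<lambda>j. (top j / 2, v - top j)) ` {..<N}"
    define Q2 where "Q2 = (\<lambda>j. (v - top j, top j / 2)) ` {..<N}"
    define Q where "Q = Q1 \<union> Q2 \<union> {(v/2, v/2)}"
    have finQ: "finite Q" unfolding Q_def Q1_def Q2_def by auto
    have t1Q: "\<forall>p\<in>Q. fst p \<ge> t1 \<and> snd p \<ge> t1"
    proof
      fix p assume p: "p \<in> Q"
      have a: "top j / 2 \<ge> t1" if "j < N" for j using N2[OF that] hv by simp
      have b: "v - top j \<ge> t1" for j using top_le[of j] v by simp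
      show "fst p \<ge> t1 \<and> snd p \<ge> t1" using p a b v unfolding Q_def Q1_def Q2_def by auto
    qed
    have cov: "\<forall>w z. hh v < w \<and> hh v < z \<and> v < w + z \<longrightarrow> (\<exists>p\<in>Q. fst p < w \<and> snd p < z)"
    proof (intro allI impI)
      fix w z assume wz: "hh v < w \<and> hh v < z \<and> v < w + z"
      show "\<exists>p\<in>Q. fst p < w \<and> snd p < z"
      proof (cases "w \<le> v/2")
        case True
        obtain j where j: "j < N" "top j / 2 < w" "w \<le> top j"
          using find_piece[OF v(1) _ True hp, of N] wz N2 N1 unfolding top_def by auto
        have "(top j / 2, v - top j) \<in> Q" using j unfolding Q_def Q1_def by auto
        moreover have "v - top j < z" using j wz by simp
        ultimately show ?thesis using j by force
      next
        case False
        show ?thesis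
        proof (cases "z \<le> v/2")
          case True
          obtain j where j: "j < N" "top j / 2 < z" "z \<le> top j"
            using find_piece[OF v(1) _ True hp, of N] wz N2 N1 unfolding top_def by auto
          have "(v - top j, top j / 2) \<in> Q" using j unfolding Q_def Q2_def by auto
          moreover have "v - top j < w" using j wz by simp
          ultimately show ?thesis using j by force
        next
          case False2: False
          have "(v/2, v/2) \<in> Q" unfolding Q_def by simp
          then show ?thesis using False False2 by force
        qed
      qed
    qed
    define f where "f p = T (fst p) * T (snd p)" for p :: "real \<times> real"
    have fnn: "f p \<ge> 0" for p unfolding f_def using Tnn by simp
    have trm: "T (top j / 2) * T (v - top j) \<le> 8 * rr^2 * (v powr (-\<kappa>) * rr^(j+1)) * T v" if "j < N" for j
    proof -
      have "T (top j / 2) * T (v - top j) \<le> 8 * rr^2 * top j powr (-\<kappa>) * T v"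
      proof (rule pair_bound[OF x0(2) x0(1)])
        show "0 < top j" by (rule top_pos)
        show "2 * top j \<le> v" using top_le[of j] by simp
        show "top j / 2 \<ge> x0" using N2[OF that] hv by simp
      qed
      also have "top j powr (-\<kappa>) = v powr (-\<kappa>) * rr^(j+1)" unfolding top_def by (rule powr_top[OF v(1)])
      finally show ?thesis .
    qed
    have B: "(\<Sum>j<N. T (top j / 2) * T (v - top j)) \<le> 8 * rr^2 * T v * (hh v powr (-\<kappa>) * rr / (rr - 1))"
    proof -
      have "(\<Sum>j<N. T (top j / 2) * T (v - top j)) \<le> (\<Sum>j<N. 8 * rr^2 * (v powr (-\<kappa>) * rr^(j+1)) * T v)"
        using trm by (intro sum_mono) auto
      also have "\<dots> = 8 * rr^2 * T v * (v powr (-\<kappa>) * (\<Sum>j<N. rr^(j+1)))"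
        by (simp add: sum_distrib_left sum_distrib_right mult_ac)
      also have "\<dots> \<le> 8 * rr^2 * T v * (v powr (-\<kappa>) * (rr^(N+1) / (rr - 1)))"
        using geo_sum[OF rr, of N] rr Tnn by (intro mult_left_mono) auto
      also have "v powr (-\<kappa>) * (rr^(N+1) / (rr - 1)) = (v powr (-\<kappa>) * rr^N) * rr / (rr - 1)" by simp
      also have "v powr (-\<kappa>) * rr^N = (v / 2^N) powr (-\<kappa>)" using powr_top[OF v(1), of N] by simp
      also have "(v / 2^N) powr (-\<kappa>) \<le> hh v powr (-\<kappa>)" using vN hp \<kappa> by (intro powr_mono2') auto
      finally show ?thesis using rr Tnn by (simp add: mult_left_mono divide_right_mono)
    qed
    have "(\<Sum>p\<in>Q. f p) \<le> (\<Sum>p\<in>Q1 \<union> Q2. f p) + f (v/2, v/2)"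
      unfolding Q_def using sum_Un_le_nn[of "Q1 \<union> Q2" "{(v/2,v/2)}" f] fnn
      unfolding Q1_def Q2_def by auto
    also have "(\<Sum>p\<in>Q1 \<union> Q2. f p) \<le> (\<Sum>p\<in>Q1. f p) + (\<Sum>p\<in>Q2. f p)"
      using sum_Un_le_nn[of Q1 Q2 f] fnn unfolding Q1_def Q2_def by auto
    also have "(\<Sum>p\<in>Q1. f p) \<le> (\<Sum>j<N. T (top j / 2) * T (v - top j))"
    proof -
      have "sum f ((\<lambda>j. (top j / 2, v - top j)) ` {..<N}) \<le> sum (f \<circ> (\<lambda>j. (top j / 2, v - top j))) {..<N}"
        by (rule sum_image_le) (auto simp: fnn)
      then show ?thesis unfolding Q1_def by (simp add: f_def o_def)
    qed
    also have "(\<Sum>p\<in>Q2. f p) \<le> (\<Sum>j<N. T (top j / 2) * T (v - top j))"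
    proof -
      have "sum f ((\<lambda>j. (v - top j, top j / 2)) ` {..<N}) \<le> sum (f \<circ> (\<lambda>j. (v - top j, top j / 2))) {..<N}"
        by (rule sum_image_le) (auto simp: fnn)
      then show ?thesis unfolding Q2_def by (simp add: f_def o_def mult.commute)
    qed
    also have "f (v/2, v/2) \<le> 8 * rr^2 * v powr (-\<kappa>) * T v"
      unfolding f_def using last_bound[OF x0(2) x0(1)] hv x0 by simp
    finally have S: "(\<Sum>p\<in>Q. f p) \<le> 2 * (8 * rr^2 * T v * (hh v powr (-\<kappa>) * rr / (rr - 1))) + 8 * rr^2 * v powr (-\<kappa>) * T v"
      using B by simp
    have "2 * (8 * rr^2 * T v * (hh v powr (-\<kappa>) * rr / (rr - 1))) + 8 * rr^2 * v powr (-\<kappa>) * T v = D v * T v"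
      unfolding D_def by (simp add: algebra_simps)
    also have "\<dots> \<le> \<eta> * T v" using elim Tnn by (intro mult_right_mono) auto
    finally have "(\<Sum>p\<in>Q. f p) \<le> \<eta> * T v" using S by simp
    then show ?case using finQ t1Q cov unfolding f_def by blast
  qed
qed

lemma good_b: "good_tail T"
  unfolding good_tail_def
proof (intro conjI allI impI)
  show "\<forall>\<^sub>F v in at_top. T v > 0" by (rule Tpos_ev)
  fix \<epsilon> :: real assume e: "\<epsilon> > 0"
  show "\<exists>h. filterlim h at_top at_top \<and> (\<forall>\<^sub>F v in at_top. h v \<le> v / 2) \<and>
      (\<forall>\<^sub>F v in at_top. T (v - h v) \<le> (1+\<epsilon>) * T v) \<and>
      (\<forall>\<eta>>0. \<forall>t1. \<forall>\<^sub>F v in at_top. \<exists>Q. finite Q \<and> (\<forall>p\<in>Q. fst p \<ge> t1 \<and> snd p \<ge> t1) \<and>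
          (\<forall>w z. h v < w \<and> h v < z \<and> v < w + z \<longrightarrow> (\<exists>p\<in>Q. fst p < w \<and> snd p < z)) \<and>
          (\<Sum>p\<in>Q. T (fst p) * T (snd p)) \<le> \<eta> * T v)"
    using hh_lim hh_half insens[OF e] tbj by blast
qed

end


lemma sv_bound:
  assumes sv: "slowly_varying L" and c: "c > 0" and r: "r > 1"
  shows "\<forall>\<^sub>F x in at_top. L (c*x) \<le> r * L x"
proof -
  have Lp: "\<forall>\<^sub>F x in at_top. L x > 0" and lim: "((\<lambda>x. L (c * x) / L x) \<longlongrightarrow> 1) at_top"
    using sv c unfolding slowly_varying_def by auto
  have "\<forall>\<^sub>F x in at_top. L (c * x) / L x < r" using order_tendstoD(2)[OF lim] r by simp
  with Lp show ?thesis by eventually_elim (simp add: divide_less_eq)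
qed

lemma good_a:
  fixes T L :: "real \<Rightarrow> real" and \<alpha> :: real
  assumes Tnn: "\<And>x. T x \<ge> 0" and T0: "(T \<longlongrightarrow> 0) at_top"
    and \<alpha>: "\<alpha> > 0" and sv: "slowly_varying L"
    and eq: "\<forall>x>0. T x = x powr (-\<alpha>) * L x"
  shows "good_tail T"
  unfolding good_tail_def
proof (intro conjI allI impI)
  have Lp: "\<forall>\<^sub>F x in at_top. L x > 0" using sv unfolding slowly_varying_def by auto
  show "\<forall>\<^sub>F v in at_top. T v > 0"
    using Lp eventually_gt_at_top[of "0::real"] by eventually_elim (simp add: eq)
  fix \<epsilon> :: real assume e: "\<epsilon> > 0"
  have lim: "((\<lambda>d. (1 - d) powr (-\<alpha>)) \<longlongrightarrow> (1 - 0) powr (-\<alpha>)) (at_right (0::real))"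
    by (intro tendsto_intros) auto
  then have "\<forall>\<^sub>F d in at_right (0::real). (1 - d) powr (-\<alpha>) < 1 + \<epsilon>/3"
    using e by (intro order_tendstoD(2)) auto
  then obtain b where b: "b > 0" "\<forall>d>0. d < b \<longrightarrow> (1 - d) powr (-\<alpha>) < 1 + \<epsilon>/3"
    unfolding eventually_at_right_field by auto
  define \<delta> where "\<delta> = min (b/2) (1/2)"
  have \<delta>: "0 < \<delta>" "\<delta> \<le> 1/2" "(1 - \<delta>) powr (-\<alpha>) < 1 + \<epsilon>/3"
    using b unfolding \<delta>_def by auto
  define c where "c = (1 - \<delta>) powr (-\<alpha>)"
  define r where "r = (1 + \<epsilon>) / (1 + \<epsilon>/3)"
  have r: "r > 1" unfolding r_def using e by (simp add: field_simps)
  have cr: "c * r \<le> 1 + \<epsilon>"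
  proof -
    have "c * r \<le> (1 + \<epsilon>/3) * r" using \<delta> r unfolding c_def by (intro mult_right_mono) auto
    also have "\<dots> = 1 + \<epsilon>" unfolding r_def using e by simp
    finally show ?thesis .
  qed
  have c0: "c > 0" unfolding c_def using \<delta> by simp
  show "\<exists>h. filterlim h at_top at_top \<and> (\<forall>\<^sub>F v in at_top. h v \<le> v / 2) \<and>
      (\<forall>\<^sub>F v in at_top. T (v - h v) \<le> (1+\<epsilon>) * T v) \<and>
      (\<forall>\<eta>>0. \<forall>t1. \<forall>\<^sub>F v in at_top. \<exists>Q. finite Q \<and> (\<forall>p\<in>Q. fst p \<ge> t1 \<and> snd p \<ge> t1) \<and>
          (\<forall>w z. h v < w \<and> h v < z \<and> v < w + z \<longrightarrow> (\<exists>p\<in>Q. fst p < w \<and> snd p < z)) \<and>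
          (\<Sum>p\<in>Q. T (fst p) * T (snd p)) \<le> \<eta> * T v)"
  proof (intro exI[of _ "\<lambda>v. \<delta> * v"] conjI allI impI)
    show hl: "filterlim (\<lambda>v. \<delta> * v) at_top at_top" using \<delta> by real_asymp
    show "\<forall>\<^sub>F v in at_top. \<delta> * v \<le> v / 2"
      using eventually_ge_at_top[of "0::real"]
    proof eventually_elim
      case (elim v)
      have "\<delta> * v \<le> (1/2) * v" using \<delta> elim by (intro mult_right_mono) auto
      then show ?case by simp
    qed
    show "\<forall>\<^sub>F v in at_top. T (v - \<delta> * v) \<le> (1+\<epsilon>) * T v"
    proof -
      have c1: "1 - \<delta> > 0" using \<delta> by simp
      show ?thesis
      using sv_bound[OF sv c1 r] Lp eventually_gt_at_top[of "0::real"]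
    proof eventually_elim
      case (elim v)
      have v1: "v - \<delta> * v = (1 - \<delta>) * v" by (simp add: algebra_simps)
      have pos: "(1 - \<delta>) * v > 0" using elim \<delta> by simp
      have "T (v - \<delta> * v) = c * v powr (-\<alpha>) * L ((1 - \<delta>) * v)"
        unfolding v1 using eq pos unfolding c_def by (simp add: powr_mult)
      also have "\<dots> \<le> c * v powr (-\<alpha>) * (r * L v)" using elim c0 \<delta> by (intro mult_left_mono) auto
      also have "\<dots> = (c * r) * T v" using eq elim by simp
      also have "\<dots> \<le> (1 + \<epsilon>) * T v" using cr Tnn by (intro mult_right_mono) auto
      finally show ?case .
    qed
    qed
    fix \<eta> :: real and t1 :: real assume \<eta>: "\<eta> > 0"
    have two: "(2::real) > 1" by simp
    define C where "C = 2 * \<delta> powr (-\<alpha>)"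
    have C: "C > 0" unfolding C_def using \<delta> by simp
    have T0': "((\<lambda>v. T (\<delta> * v)) \<longlongrightarrow> 0) at_top" using filterlim_compose[OF T0 hl] by simp
    have evs: "\<forall>\<^sub>F v in at_top. T (\<delta> * v) < \<eta> / C" using order_tendstoD(2)[OF T0'] \<eta> C by simp
    have evt: "\<forall>\<^sub>F v in at_top. \<delta> * v \<ge> t1" using hl unfolding filterlim_at_top by blast
    show "\<forall>\<^sub>F v in at_top. \<exists>Q. finite Q \<and> (\<forall>p\<in>Q. fst p \<ge> t1 \<and> snd p \<ge> t1) \<and>
          (\<forall>w z. \<delta> * v < w \<and> \<delta> * v < z \<and> v < w + z \<longrightarrow> (\<exists>p\<in>Q. fst p < w \<and> snd p < z)) \<and>
          (\<Sum>p\<in>Q. T (fst p) * T (snd p)) \<le> \<eta> * T v"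
      using evs evt sv_bound[OF sv \<delta>(1) two] Lp eventually_gt_at_top[of "0::real"]
    proof eventually_elim
      case (elim v)
      have b1: "T (\<delta> * v) \<le> C * T v"
      proof -
        have "T (\<delta> * v) = \<delta> powr (-\<alpha>) * v powr (-\<alpha>) * L (\<delta> * v)"
          using eq \<delta> elim by (simp add: powr_mult)
        also have "\<dots> \<le> \<delta> powr (-\<alpha>) * v powr (-\<alpha>) * (2 * L v)" using elim by (intro mult_left_mono) auto
        also have "\<dots> = C * T v" unfolding C_def using eq elim by simp
        finally show ?thesis .
      qed
      have "T (\<delta> * v) * T (\<delta> * v) \<le> (\<eta> / C) * (C * T v)"
        using elim b1 Tnn \<eta> C by (intro mult_mono) auto
      also have "\<dots> = \<eta> * T v" using C by simp
      finally have s: "T (\<delta> * v) * T (\<delta> * v) \<le> \<eta> * T v" .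
      show ?case
        by (rule exI[of _ "{(\<delta> * v, \<delta> * v)}"]) (use s elim in auto)
    qed
  qed
qed



theorem mainTheorem3:
  fixes M :: "'a measure" and X :: "nat \<Rightarrow> 'a \<Rightarrow> real" and a :: real and k :: nat
  assumes "prob_space M"
    and rv: "\<And>i. i \<ge> 1 \<Longrightarrow> X i \<in> borel_measurable M"
    and indep: "prob_space.indep_vars M (\<lambda>_. borel) X {1..}"
    and ident: "\<And>i. i \<ge> 1 \<Longrightarrow> distr M borel (X i) = distr M borel (X 1)"
    and "a > 0"
    and "integrable M (X 1)"
    and "prob_space.expectation M (X 1) = - a"
    and tail: "(\<exists>\<alpha> L. \<alpha> > 1 \<and> slowly_varying L \<and>
                 (\<forall>x>0. measure M {\<omega>\<in>space M. X 1 \<omega> > x} = x powr (-\<alpha>) * L x))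
             \<or> (\<exists>\<kappa> \<beta> g g'. 0 < \<beta> \<and> \<beta> < 1/2 \<and>
                 mono_on {0<..} g \<and>
                 (\<forall>x>0. (g has_real_derivative g' x) (at x)) \<and> continuous_on {0<..} g' \<and>
                 antimono_on {0<..} (\<lambda>x. g x / x powr \<beta>) \<and>
                 ((\<lambda>x. measure M {\<omega>\<in>space M. X 1 \<omega> > x}) \<sim>[at_top]
                    (\<lambda>x. x powr (-\<kappa>) * exp (- g x))) \<and>
                 integrable M (\<lambda>\<omega>. \<bar>X 1 \<omega>\<bar> powr \<kappa>) \<and> \<kappa> > 1 / (1 - \<beta>))"
    and "k \<ge> 1"
  shows "\<forall>\<epsilon>>0. \<forall>\<^sub>F y in at_top. \<forall>v>y.
           \<bar>measure M {\<omega>\<in>space M. rw_S X k \<omega> > v \<and> rw_sigma X y \<omega> = enat k}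
              / measure M {\<omega>\<in>space M. X 1 \<omega> > v}
            - measure M {\<omega>\<in>space M. rw_tau X \<omega> > enat (k - 1)}\<bar> \<le> \<epsilon>"
proof -
  have iid: "iid_rw M X"
  proof (rule iid_rw.intro[OF assms(1)])
    show "iid_rw_axioms M X"
    proof (rule iid_rw_axioms.intro)
      show "\<And>i. i \<ge> 1 \<Longrightarrow> X i \<in> borel_measurable M" by (rule rv)
      show "prob_space.indep_vars M (\<lambda>_. borel) X {1..}" by (rule indep)
      show "\<And>i. i \<ge> 1 \<Longrightarrow> distr M borel (X i) = distr M borel (X 1)" by (rule ident)
    qed
  qed
  interpret iid_rw M X by (rule iid)
  have Tl_eq: "Tl = (\<lambda>x. measure M {\<omega>\<in>space M. X 1 \<omega> > x})" by (simp add: Tl_def[abs_def])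
  have good: "good_tail Tl"
    using tail
  proof (elim disjE exE conjE)
    fix \<alpha> L assume a1: "\<alpha> > 1" and sv: "slowly_varying L"
      and eq: "\<forall>x>0. measure M {\<omega>\<in>space M. X 1 \<omega> > x} = x powr (-\<alpha>) * L x"
    show "good_tail Tl"
    proof (rule good_a[OF Tl_nonneg _ _ sv])
      show "(Tl \<longlongrightarrow> 0) at_top" unfolding Tl_eq by (rule tail0) simp
      show "\<alpha> > 0" using a1 by simp
      show "\<forall>x>0. Tl x = x powr (-\<alpha>) * L x" using eq unfolding Tl_eq by simp
    qed
  next
    fix \<kappa> \<beta> g g'
    assume b: "0 < \<beta>" "\<beta> < 1/2" and gm: "mono_on {0<..} g"
      and ga: "antimono_on {0<..} (\<lambda>x. g x / x powr \<beta>)"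
      and eqv: "(\<lambda>x. measure M {\<omega>\<in>space M. X 1 \<omega> > x}) \<sim>[at_top] (\<lambda>x. x powr (-\<kappa>) * exp (- g x))"
      and kb: "\<kappa> > 1 / (1 - \<beta>)"
    have k0: "\<kappa> > 0"
    proof -
      have "1 / (1 - \<beta>) > 0" using b by simp
      then show ?thesis using kb by linarith
    qed
    have gf: "gfun g \<beta>" by (rule gfun.intro) (fact b(1), fact b(2), fact gm, fact ga)
    have ta: "tailb_axioms g Tl \<kappa>"
    proof (rule tailb_axioms.intro)
      show "\<kappa> > 0" by (rule k0)
      show "\<And>x y. x \<le> y \<Longrightarrow> Tl y \<le> Tl x" by (rule Tl_anti)
      show "\<And>x. Tl x \<ge> 0" by (rule Tl_nonneg)
      show "Tl \<sim>[at_top] (\<lambda>x. x powr (-\<kappa>) * exp (- g x))" unfolding Tl_eq by (rule eqv)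
    qed
    interpret tailb g \<beta> Tl \<kappa> by (rule tailb.intro[OF gf ta])
    show "good_tail Tl" by (rule good_b)
  qed
  show ?thesis using main_generic[OF good assms(9)] unfolding Tl_eq .
qed



end
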